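(* Let $Y$ be a right canonical matrix for $T$ at $\lambda_0$. Then the elements $[Y\Delta^{-1}\chi_0^{j-1}e_i]\in\mathcal{M}^n/\mathcal{H}_0^n$, for $i=1,\dots,r$ and $j=1,\dots,m_i$ (with $e_i$ the $i$-th unit vector of $\mathbb{C}^r$), form a basis over $\mathbb{C}$ of $\ker\overline{T}$, where $\overline{T}[y]=[Ty]$.
   Context: Let $\Omega\subset\mathbb{C}$ be open and $\lambda_0\in\Omega$ fixed. $\mathcal{H}$ denotes the ring of holomorphic functions on $\Omega$, $\mathcal{M}$ the field of meromorphic functions on $\Omega$, and $\mathcal{H}_0$ the ring of functions holomorphic in some neighborhood of $\lambda_0$. $\chi_0(\lambda)=\lambda-\lambda_0$. $\mathcal{M}^n/\mathcal{H}_0^n$ denotes meromorphic vectors modulo those holomorphic near $\lambda_0$, $[y]$ the class of $y$, and $\overline{T}$ the induced $\mathbb{C}$-linear map $[y]\mapsto[Ty]$ on this quotient. Throughout, $T\in\mathcal{H}^{n\times n}$ with $\det T$ not identically zero and $\det T(\lambda_0)=0$, and $r=\dim\ker T(\lambda_0)$. There exist $U_L,U_R\in\mathcal{H}_0^{n\times n}$ with $U_L(\lambda_0),U_R(\lambda_0)$ nonsingular and uniquely determined integers $m_1\ge\cdots\ge m_n\ge 0$ (the partial multiplicities) with $U_LTU_R=\mathrm{diag}(\chi_0^{m_1},\dots,\chi_0^{m_n})$; $m_i>0$ exactly for $i\le r$. Set $\Delta=\mathrm{diag}(\chi_0^{m_1},\dots,\chi_0^{m_r})$. A root function for $T$ at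 $\lambda_0$ is $y\in\mathcal{H}^n$ with $y(\lambda_0)\neq0$ and $T(\lambda_0)y(\lambda_0)=0$; its multiplicity $\nu(y)$ is the order of the zero of $Ty$ at $\lambda_0$. A right canonical matrix for $T$ at $\lambda_0$ is $Y\in\mathcal{H}^{n\times r}$ whose columns $y_1,\dots,y_r$ are root functions such that (a) $y_1(\lambda_0),\dots,y_r(\lambda_0)$ are linearly independent, (b) $\sum_{i=1}^r\nu(y_i)=\sum_{i=1}^r m_i$, (c) $\nu(y_1)\ge\cdots\ge\nu(y_r)$. *)

theory Defs
  imports "HOL-Complex_Analysis.Complex_Analysis" "Jordan_Normal_Form.Determinant"
    "Jordan_Normal_Form.Matrix_Kernel"
begin

text \<open>Vectors in \<open>\<complex>^n\<close> are JNF vectors \<open>complex vec\<close> of dimension n,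
  matrices are \<open>complex mat\<close>; indices start at 0. A (vector/matrix valued) function of
  \<open>\<lambda>\<close> is a function \<open>complex \<Rightarrow> complex vec\<close> (resp. \<open>complex mat\<close>) whose values have the
  right dimension everywhere; holomorphy/meromorphy is required entrywise.
  Meromorphic functions are only relevant up to values at isolated points, which is
  how HOL's \<open>meromorphic_on\<close> works (it only speaks about punctured neighbourhoods).\<close>

definition hol_vec :: "nat \<Rightarrow> complex set \<Rightarrow> (complex \<Rightarrow> complex vec) \<Rightarrow> bool" where
  "hol_vec n \<Omega> y \<longleftrightarrow> (\<forall>z. y z \<in> carrier_vec n) \<and> (\<forall>i<n. (\<lambda>z. y z $ i) holomorphic_on \<Omega>)"

definition hol_mat :: "nat \<Rightarrow> nat \<Rightarrow> complex set \<Rightarrow> (complex \<Rightarrow> complex mat) \<Rightarrow> bool" where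
  "hol_mat n k \<Omega> A \<longleftrightarrow> (\<forall>z. A z \<in> carrier_mat n k) \<and>
     (\<forall>i<n. \<forall>j<k. (\<lambda>z. A z $$ (i,j)) holomorphic_on \<Omega>)"

definition hol0_mat :: "nat \<Rightarrow> complex \<Rightarrow> (complex \<Rightarrow> complex mat) \<Rightarrow> bool" where
  "hol0_mat n l0 A \<longleftrightarrow> (\<forall>z. A z \<in> carrier_mat n n) \<and>
     (\<forall>i<n. \<forall>j<n. (\<lambda>z. A z $$ (i,j)) analytic_on {l0})"

definition mero_vec :: "nat \<Rightarrow> complex set \<Rightarrow> (complex \<Rightarrow> complex vec) \<Rightarrow> bool" where
  "mero_vec n \<Omega> y \<longleftrightarrow> (\<forall>z. y z \<in> carrier_vec n) \<and> (\<forall>i<n. (\<lambda>z. y z $ i) meromorphic_on \<Omega>)"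

text \<open>A meromorphic vector lies in \<open>\<H>_0^n\<close>: each component coincides (as a meromorphic
  function, i.e. on a punctured neighbourhood of \<open>l0\<close>) with a function holomorphic in a
  neighbourhood of \<open>l0\<close>. Thus \<open>[y] = [y']\<close> in \<open>\<M>^n/\<H>_0^n\<close> iff \<open>hol0_vec n l0 (y - y')\<close>.\<close>
definition hol0_vec :: "nat \<Rightarrow> complex \<Rightarrow> (complex \<Rightarrow> complex vec) \<Rightarrow> bool" where
  "hol0_vec n l0 y \<longleftrightarrow>
     (\<forall>i<n. \<exists>g. g analytic_on {l0} \<and> (\<forall>\<^sub>F w in at l0. y w $ i = g w))"

text \<open>Partial multiplicities: \<open>U\<^sub>L T U\<^sub>R = diag(\<chi>\<^sub>0^{m_1},\<dots>,\<chi>\<^sub>0^{m_n})\<close> near \<open>l0\<close>,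
  with \<open>m_1 \<ge> \<dots> \<ge> m_n\<close> (here indexed \<open>m 0 \<ge> \<dots> \<ge> m (n-1)\<close>).\<close>
definition partial_multiplicities ::
  "nat \<Rightarrow> (complex \<Rightarrow> complex mat) \<Rightarrow> complex \<Rightarrow> (nat \<Rightarrow> nat) \<Rightarrow> bool" where
  "partial_multiplicities n T l0 m \<longleftrightarrow>
     (\<forall>i j. i \<le> j \<longrightarrow> j < n \<longrightarrow> m j \<le> m i) \<and>
     (\<exists>UL UR. hol0_mat n l0 UL \<and> hol0_mat n l0 UR \<and>
        det (UL l0) \<noteq> 0 \<and> det (UR l0) \<noteq> 0 \<and>
        (\<forall>\<^sub>F z in nhds l0. UL z * T z * UR z = mat_diag n (\<lambda>i. (z - l0) ^ m i)))"

definition root_function ::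
  "nat \<Rightarrow> complex set \<Rightarrow> (complex \<Rightarrow> complex mat) \<Rightarrow> complex \<Rightarrow> (complex \<Rightarrow> complex vec) \<Rightarrow> bool" where
  "root_function n \<Omega> T l0 y \<longleftrightarrow>
     hol_vec n \<Omega> y \<and> y l0 \<noteq> 0\<^sub>v n \<and> T l0 *\<^sub>v y l0 = 0\<^sub>v n"

definition zero_order_vec :: "nat \<Rightarrow> (complex \<Rightarrow> complex vec) \<Rightarrow> complex \<Rightarrow> nat" where
  "zero_order_vec n f l0 = (THE k. \<exists>g. (\<forall>z. g z \<in> carrier_vec n) \<and>
      (\<forall>i<n. (\<lambda>z. g z $ i) analytic_on {l0}) \<and> g l0 \<noteq> 0\<^sub>v n \<and>
      (\<forall>\<^sub>F z in nhds l0. f z = (z - l0) ^ k \<cdot>\<^sub>v g z))"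

definition root_mult :: "nat \<Rightarrow> (complex \<Rightarrow> complex mat) \<Rightarrow> complex \<Rightarrow> (complex \<Rightarrow> complex vec) \<Rightarrow> nat" where
  "root_mult n T l0 y = zero_order_vec n (\<lambda>z. T z *\<^sub>v y z) l0"

definition right_canonical_matrix ::
  "nat \<Rightarrow> nat \<Rightarrow> complex set \<Rightarrow> (complex \<Rightarrow> complex mat) \<Rightarrow> complex \<Rightarrow> (nat \<Rightarrow> nat)
     \<Rightarrow> (complex \<Rightarrow> complex mat) \<Rightarrow> bool" where
  "right_canonical_matrix n r \<Omega> T l0 m Y \<longleftrightarrow>
     hol_mat n r \<Omega> Y \<and>
     (\<forall>i<r. root_function n \<Omega> T l0 (\<lambda>z. col (Y z) i)) \<and>
     (\<forall>c \<in> carrier_vec r. Y l0 *\<^sub>v c = 0\<^sub>v n \<longrightarrow> c = 0\<^sub>v r) \<and>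
     (\<Sum>i<r. root_mult n T l0 (\<lambda>z. col (Y z) i)) = (\<Sum>i<r. m i) \<and>
     (\<forall>i j. i \<le> j \<longrightarrow> j < r \<longrightarrow>
        root_mult n T l0 (\<lambda>z. col (Y z) j) \<le> root_mult n T l0 (\<lambda>z. col (Y z) i))"

definition lin_comb :: "nat \<Rightarrow> 'k set \<Rightarrow> ('k \<Rightarrow> complex) \<Rightarrow> ('k \<Rightarrow> complex \<Rightarrow> complex vec)
    \<Rightarrow> complex \<Rightarrow> complex vec" where
  "lin_comb n K c v z = vec n (\<lambda>l. \<Sum>k\<in>K. c k * (v k z $ l))"

text \<open>The classes \<open>[v k]\<close>, \<open>k \<in> K\<close>, form a \<open>\<complex>\<close>-basis of \<open>ker \<overline>T\<close> in \<open>\<M>^n/\<H>_0^n\<close>,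
  where \<open>ker \<overline>T = {[y] | y \<in> \<M>^n, Ty \<in> \<H>_0^n}\<close>.\<close>
definition basis_of_ker_Tbar ::
  "nat \<Rightarrow> complex set \<Rightarrow> (complex \<Rightarrow> complex mat) \<Rightarrow> complex \<Rightarrow> 'k set
     \<Rightarrow> ('k \<Rightarrow> complex \<Rightarrow> complex vec) \<Rightarrow> bool" where
  "basis_of_ker_Tbar n \<Omega> T l0 K v \<longleftrightarrow>
     finite K \<and>
     (\<forall>k\<in>K. mero_vec n \<Omega> (v k) \<and> hol0_vec n l0 (\<lambda>z. T z *\<^sub>v v k z)) \<and>
     (\<forall>c. hol0_vec n l0 (lin_comb n K c v) \<longrightarrow> (\<forall>k\<in>K. c k = 0)) \<and>
     (\<forall>y. mero_vec n \<Omega> y \<and> hol0_vec n l0 (\<lambda>z. T z *\<^sub>v y z) \<longrightarrow>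
        (\<exists>c. hol0_vec n l0 (\<lambda>z. y z - lin_comb n K c v z)))"

end

theory Submission
  imports Defs
begin

no_notation Finite_Cartesian_Product.vec_nth (infixl \<open>$\<close> 90)
no_notation Formal_Power_Series.fps_nth (infixl \<open>$\<close> 75)

lemma mv_index:
  assumes "A \<in> carrier_mat a b" "x \<in> carrier_vec b" "l < a"
  shows "(A *\<^sub>v x) $ l = (\<Sum>j<b. A $$ (l,j) * x $ j)"
  using assms by (auto simp: scalar_prod_def atLeast0LessThan)

definition h0 :: "complex \<Rightarrow> (complex \<Rightarrow> complex) \<Rightarrow> bool" where
  "h0 l0 f \<longleftrightarrow> (\<exists>g. g analytic_on {l0} \<and> (\<forall>\<^sub>F w in at l0. f w = g w))"

lemma hol0_vec_h0: "hol0_vec n l0 y \<longleftrightarrow> (\<forall>i<n. h0 l0 (\<lambda>z. y z $ i))"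
  unfolding hol0_vec_def h0_def ..

lemma h0_an: "f analytic_on {l0} \<Longrightarrow> h0 l0 f"
  unfolding h0_def by auto

lemma h0_cong: "(\<forall>\<^sub>F w in at l0. f w = g w) \<Longrightarrow> h0 l0 g \<Longrightarrow> h0 l0 f"
  unfolding h0_def
proof (elim exE conjE)
  fix g' assume "\<forall>\<^sub>F w in at l0. f w = g w" "g' analytic_on {l0}" "\<forall>\<^sub>F w in at l0. g w = g' w"
  then show "\<exists>h. h analytic_on {l0} \<and> (\<forall>\<^sub>F w in at l0. f w = h w)"
    by (intro exI[of _ g']) (auto elim: eventually_elim2)
qed

lemma h0_add: "h0 l0 f \<Longrightarrow> h0 l0 g \<Longrightarrow> h0 l0 (\<lambda>z. f z + g z)"
  unfolding h0_def
proof (elim exE conjE)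
  fix f' g' assume "f' analytic_on {l0}" "g' analytic_on {l0}"
    "\<forall>\<^sub>F w in at l0. f w = f' w" "\<forall>\<^sub>F w in at l0. g w = g' w"
  then show "\<exists>h. h analytic_on {l0} \<and> (\<forall>\<^sub>F w in at l0. f w + g w = h w)"
    by (intro exI[of _ "\<lambda>z. f' z + g' z"]) (auto intro: analytic_intros elim: eventually_elim2)
qed

lemma h0_mult: "h0 l0 f \<Longrightarrow> h0 l0 g \<Longrightarrow> h0 l0 (\<lambda>z. f z * g z)"
  unfolding h0_def
proof (elim exE conjE)
  fix f' g' assume "f' analytic_on {l0}" "g' analytic_on {l0}"
    "\<forall>\<^sub>F w in at l0. f w = f' w" "\<forall>\<^sub>F w in at l0. g w = g' w"
  then show "\<exists>h. h analytic_on {l0} \<and> (\<forall>\<^sub>F w in at l0. f w * g w = h w)"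
    by (intro exI[of _ "\<lambda>z. f' z * g' z"]) (auto intro: analytic_intros elim: eventually_elim2)
qed

lemma h0_uminus: "h0 l0 f \<Longrightarrow> h0 l0 (\<lambda>z. - f z)"
  unfolding h0_def
proof (elim exE conjE)
  fix f' assume "f' analytic_on {l0}" "\<forall>\<^sub>F w in at l0. f w = f' w"
  then show "\<exists>h. h analytic_on {l0} \<and> (\<forall>\<^sub>F w in at l0. - f w = h w)"
    by (intro exI[of _ "\<lambda>z. - f' z"]) (auto intro: analytic_intros elim: eventually_mono)
qed

lemma h0_diff: "h0 l0 f \<Longrightarrow> h0 l0 g \<Longrightarrow> h0 l0 (\<lambda>z. f z - g z)"
  using h0_add[of l0 f "\<lambda>z. - g z"] h0_uminus[of l0 g] by simp

lemma h0_const: "h0 l0 (\<lambda>z. c)"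
  by (rule h0_an) auto

lemma h0_sum: "finite S \<Longrightarrow> (\<And>k. k \<in> S \<Longrightarrow> h0 l0 (f k)) \<Longrightarrow> h0 l0 (\<lambda>z. \<Sum>k\<in>S. f k z)"
proof (induction S rule: finite_induct)
  case empty then show ?case using h0_const[of l0 0] by simp
next
  case (insert x F)
  then show ?case using h0_add[of l0 "f x" "\<lambda>z. \<Sum>k\<in>F. f k z"] by simp
qed

lemma h0_div:
  assumes "g analytic_on {l0}" "g l0 = 0"
  shows "h0 l0 (\<lambda>z. g z / (z - l0))"
proof -
  obtain e where e: "e > 0" "g holomorphic_on ball l0 e" using assms(1) analytic_at_ball by auto
  define F where "F = (\<lambda>z. if z = l0 then deriv g l0 else (g z - g l0) / (z - l0))"
  have "F holomorphic_on ball l0 e" unfolding F_def by (rule pole_lemma_open) (use e in auto)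
  then have "F analytic_on {l0}" using e by (intro holomorphic_on_imp_analytic_at) auto
  moreover have "\<forall>\<^sub>F w in at l0. g w / (w - l0) = F w"
    unfolding F_def using assms(2) by (auto simp: eventually_at_filter)
  ultimately show ?thesis unfolding h0_def by blast
qed

lemma cont_eq_at:
  fixes f g :: "complex \<Rightarrow> complex"
  assumes "isCont f l0" "isCont g l0" "\<forall>\<^sub>F w in at l0. f w = g w"
  shows "f l0 = (g l0 :: complex)"
proof -
  have "(f \<longlongrightarrow> f l0) (at l0)" using assms(1) by (simp add: isCont_def)
  moreover have "(f \<longlongrightarrow> g l0) (at l0)"
    using assms(2) by (simp add: isCont_def) (rule tendsto_cong[THEN iffD2, OF assms(3)])
  ultimately show ?thesis by (rule tendsto_unique[OF at_neq_bot])
qed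

lemma h0_lim:
  assumes "h0 l0 f" "p > 0"
  shows "((\<lambda>z. (z - l0) ^ p * f z) \<longlongrightarrow> 0) (at l0)"
proof -
  obtain g where g: "g analytic_on {l0}" "\<forall>\<^sub>F w in at l0. f w = g w" using assms(1) h0_def by auto
  have "isCont (\<lambda>z. (z - l0) ^ p * g z) l0"
    using analytic_at_imp_isCont[OF g(1)] by (intro continuous_intros) auto
  then have "((\<lambda>z. (z - l0) ^ p * g z) \<longlongrightarrow> 0) (at l0)"
    using assms(2) by (simp add: isCont_def power_0_left)
  then show ?thesis
    by (rule tendsto_cong[THEN iffD1, rotated]) (use g(2) in \<open>auto elim: eventually_mono\<close>)
qed

lemma det_analytic:
  assumes "\<And>z. A z \<in> carrier_mat k k" "\<And>i j. i < k \<Longrightarrow> j < k \<Longrightarrow> (\<lambda>z. A z $$ (i,j)) analytic_on {l0}"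
  shows "(\<lambda>z. det (A z)) analytic_on {l0}"
proof -
  have eq: "(\<lambda>z. det (A z)) = (\<lambda>z. \<Sum>p\<in>{p. p permutes {0..<k}}. signof p * (\<Prod>i=0..<k. A z $$ (i, p i)))"
    using det_def'[OF assms(1)] by auto
  show ?thesis unfolding eq
  proof (intro analytic_intros)
    fix p i assume "p \<in> {p. p permutes {0..<k}}" "i \<in> {0..<k}"
    then have "p i < k" using permutes_in_image by fastforce
    then show "(\<lambda>z. A z $$ (i, p i)) analytic_on {l0}" using assms(2) \<open>i \<in> {0..<k}\<close> by auto
  qed
qed

lemma adj_analytic:
  assumes "\<And>z. A z \<in> carrier_mat k k" "\<And>i j. i < k \<Longrightarrow> j < k \<Longrightarrow> (\<lambda>z. A z $$ (i,j)) analytic_on {l0}"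
    and "i < k" "j < k"
  shows "(\<lambda>z. adj_mat (A z) $$ (i,j)) analytic_on {l0}"
proof -
  have eq: "(\<lambda>z. adj_mat (A z) $$ (i,j)) = (\<lambda>z. (-1)^(j+i) * det (mat_delete (A z) j i))"
  proof
    fix z
    have "dim_row (A z) = k" "dim_col (A z) = k" using assms(1)[of z] by auto
    then show "adj_mat (A z) $$ (i,j) = (-1)^(j+i) * det (mat_delete (A z) j i)"
      using assms(3,4) by (simp add: adj_mat_def cofactor_def)
  qed
  have "(\<lambda>z. det (mat_delete (A z) j i)) analytic_on {l0}"
  proof (rule det_analytic[where k = "k - 1"])
    show "mat_delete (A z) j i \<in> carrier_mat (k-1) (k-1)" for z
      using mat_delete_carrier[OF assms(1)] .
    fix a b assume ab: "a < k - 1" "b < k - 1"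
    have eq2: "(\<lambda>z. mat_delete (A z) j i $$ (a, b)) =
      (\<lambda>z. A z $$ (if a < j then a else Suc a, if b < i then b else Suc b))"
    proof
      fix z
      have "dim_row (A z) = k" "dim_col (A z) = k" using assms(1)[of z] by auto
      then show "mat_delete (A z) j i $$ (a, b) = A z $$ (if a < j then a else Suc a, if b < i then b else Suc b)"
        using ab by (simp add: mat_delete_def)
    qed
    show "(\<lambda>z. mat_delete (A z) j i $$ (a, b)) analytic_on {l0}"
      unfolding eq2 by (rule assms(2)) (use ab in auto)
  qed
  then show ?thesis unfolding eq by (intro analytic_intros)
qed

lemma mv_analytic:
  fixes x :: "complex \<Rightarrow> complex vec"
  assumes "\<And>z. A z \<in> carrier_mat a b" "\<And>i j. i < a \<Longrightarrow> j < b \<Longrightarrow> (\<lambda>z. A z $$ (i,j)) analytic_on {l0}"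
    "\<And>z. x z \<in> carrier_vec b" "\<And>j. j < b \<Longrightarrow> (\<lambda>z. x z $ j) analytic_on {l0}" "l < a"
  shows "(\<lambda>z. (A z *\<^sub>v x z) $ l) analytic_on {l0}"
proof -
  have eq: "(\<lambda>z. (A z *\<^sub>v x z) $ l) = (\<lambda>z. \<Sum>j<b. A z $$ (l,j) * x z $ j)"
    using mv_index[OF assms(1) assms(3) assms(5)] by auto
  show ?thesis unfolding eq using assms(2,4,5) by (intro analytic_intros) auto
qed

lemma LA1:
  fixes x :: "nat \<Rightarrow> nat \<Rightarrow> complex"
  assumes zero: "\<And>j l. j < k \<Longrightarrow> s \<le> l \<Longrightarrow> l < n \<Longrightarrow> x j l = 0"
    and indep: "\<And>c. (\<forall>l<n. (\<Sum>j<k. c j * x j l) = 0) \<Longrightarrow> \<forall>j<k. c j = 0"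
  shows "k \<le> s"
proof (rule ccontr)
  assume "\<not> k \<le> s" hence sk: "s < k" by simp
  define X where "X = mat k k (\<lambda>(l,j). if l < s then x j l else 0)"
  have Xc: "X \<in> carrier_mat k k" by (simp add: X_def)
  have "det X = 0"
  proof -
    have "X = mat\<^sub>r k k (\<lambda>i. if i = k - 1 then 0\<^sub>v k else row X i)"
      by (rule eq_matI) (use sk in \<open>auto simp: X_def\<close>)
    then show ?thesis using det_row_0[of "k-1" k "\<lambda>i. row X i"] sk Xc by auto
  qed
  then obtain v where v: "v \<in> carrier_vec k" "v \<noteq> 0\<^sub>v k" "X *\<^sub>v v = 0\<^sub>v k"
    using det_0_iff_vec_prod_zero[OF Xc] by auto
  have "\<forall>l<n. (\<Sum>j<k. v $ j * x j l) = 0"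
  proof (intro allI impI)
    fix l assume l: "l < n"
    show "(\<Sum>j<k. v $ j * x j l) = 0"
    proof (cases "l < s")
      case True
      then have "(X *\<^sub>v v) $ l = (\<Sum>j<k. X $$ (l,j) * v $ j)"
        using mv_index[OF Xc v(1)] sk by auto
      also have "\<dots> = (\<Sum>j<k. v $ j * x j l)"
        using True sk by (intro sum.cong) (auto simp: X_def)
      finally show ?thesis using v(3) True sk by auto
    next
      case False
      then show ?thesis using zero l by auto
    qed
  qed
  then have "\<forall>j<k. v $ j = 0" by (rule indep)
  then have "v = 0\<^sub>v k" using v(1) by (intro eq_vecI) auto
  then show False using v(2) by simp
qed

lemma LA2:
  fixes x :: "nat \<Rightarrow> nat \<Rightarrow> complex" and w :: "nat \<Rightarrow> complex"
  assumes zero: "\<And>j l. j < s \<Longrightarrow> s \<le> l \<Longrightarrow> l < n \<Longrightarrow> x j l = 0"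
    and indep: "\<And>c. (\<forall>l<n. (\<Sum>j<s. c j * x j l) = 0) \<Longrightarrow> \<forall>j<s. c j = 0"
    and sn: "s \<le> n" and wz: "\<And>l. s \<le> l \<Longrightarrow> l < n \<Longrightarrow> w l = 0"
  shows "\<exists>c. \<forall>l<n. w l = (\<Sum>j<s. c j * x j l)"
proof -
  define X where "X = mat s s (\<lambda>(l,j). x j l)"
  have Xc: "X \<in> carrier_mat s s" by (simp add: X_def)
  have "det X \<noteq> 0"
  proof
    assume "det X = 0"
    then obtain v where v: "v \<in> carrier_vec s" "v \<noteq> 0\<^sub>v s" "X *\<^sub>v v = 0\<^sub>v s"
      using det_0_iff_vec_prod_zero[OF Xc] by auto
    have "\<forall>l<n. (\<Sum>j<s. v $ j * x j l) = 0"
    proof (intro allI impI)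
      fix l assume l: "l < n"
      show "(\<Sum>j<s. v $ j * x j l) = 0"
      proof (cases "l < s")
        case True
        then have "(X *\<^sub>v v) $ l = (\<Sum>j<s. X $$ (l,j) * v $ j)"
          using mv_index[OF Xc v(1)] by auto
        also have "\<dots> = (\<Sum>j<s. v $ j * x j l)"
          using True by (intro sum.cong) (auto simp: X_def)
        finally show ?thesis using v(3) True by auto
      next
        case False
        then show ?thesis using zero l by auto
      qed
    qed
    then have "\<forall>j<s. v $ j = 0" by (rule indep)
    then have "v = 0\<^sub>v s" using v(1) by (intro eq_vecI) auto
    then show False using v(2) by simp
  qed
  from det_non_zero_imp_unit[OF Xc this, unfolded Units_def, of "()"]
  obtain B where B: "B \<in> carrier_mat s s" and XB: "X * B = 1\<^sub>m s"
    by (auto simp: ring_mat_def)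
  define c where "c = B *\<^sub>v vec s w"
  have cc: "c \<in> carrier_vec s" using B by (simp add: c_def)
  have "X *\<^sub>v c = vec s w"
  proof -
    have "X *\<^sub>v c = (X * B) *\<^sub>v vec s w"
      unfolding c_def by (rule assoc_mult_mat_vec[symmetric, OF Xc B]) simp
    then show ?thesis unfolding XB by simp
  qed
  show ?thesis
  proof (intro exI[of _ "\<lambda>j. c $ j"] allI impI)
    fix l assume l: "l < n"
    show "w l = (\<Sum>j<s. c $ j * x j l)"
    proof (cases "l < s")
      case True
      have "w l = (X *\<^sub>v c) $ l" using \<open>X *\<^sub>v c = vec s w\<close> True by simp
      also have "\<dots> = (\<Sum>j<s. X $$ (l,j) * c $ j)" using mv_index[OF Xc cc True] .
      also have "\<dots> = (\<Sum>j<s. c $ j * x j l)" using True by (intro sum.cong) (auto simp: X_def)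
      finally show ?thesis .
    next
      case False
      then show ?thesis using zero wz l by auto
    qed
  qed
qed



lemma hol_mat_an:
  assumes "hol_mat a b \<Omega> A" "open \<Omega>" "l0 \<in> \<Omega>" "i < a" "j < b"
  shows "(\<lambda>z. A z $$ (i,j)) analytic_on {l0}"
  using assms unfolding hol_mat_def by (meson holomorphic_on_imp_analytic_at)

lemma hol_mat_carrier: "hol_mat a b \<Omega> A \<Longrightarrow> A z \<in> carrier_mat a b"
  unfolding hol_mat_def by auto

lemma hol0_mat_an: "hol0_mat n l0 A \<Longrightarrow> i < n \<Longrightarrow> j < n \<Longrightarrow> (\<lambda>z. A z $$ (i,j)) analytic_on {l0}"
  unfolding hol0_mat_def by auto

lemma hol0_mat_carrier: "hol0_mat n l0 A \<Longrightarrow> A z \<in> carrier_mat n n"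
  unfolding hol0_mat_def by auto

lemma comp_rep:
  fixes h :: "complex \<Rightarrow> complex"
  assumes e: "e > 0" and hol: "h holomorphic_on ball l0 e"
  shows "(\<forall>\<^sub>F z in nhds l0. h z = 0) \<or>
    (\<exists>k g. g analytic_on {l0} \<and> g l0 \<noteq> 0 \<and> (\<forall>\<^sub>F z in nhds l0. h z = g z * (z - l0) ^ k))"
proof (cases "\<forall>w\<in>ball l0 e. h w = 0")
  case True
  then have "\<forall>\<^sub>F z in nhds l0. h z = 0"
    using e by (intro eventually_nhds_in_open[THEN eventually_mono, of "ball l0 e"]) auto
  then show ?thesis by blast
next
  case False
  then have ne: "\<exists>w\<in>ball l0 e. h w \<noteq> 0" by blast
  obtain rr where rr: "rr > 0" "cball l0 rr \<subseteq> ball l0 e" "zor_poly h l0 holomorphic_on cball l0 rr"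
    "\<forall>w\<in>cball l0 rr. h w = zor_poly h l0 w * (w - l0) ^ nat (zorder h l0) \<and> zor_poly h l0 w \<noteq> 0"
  proof -
    have "\<exists>r>0. cball l0 r \<subseteq> ball l0 e \<and> zor_poly h l0 holomorphic_on cball l0 r \<and>
      (\<forall>w\<in>cball l0 r. h w = zor_poly h l0 w * (w - l0) ^ nat (zorder h l0) \<and> zor_poly h l0 w \<noteq> 0)"
      using zorder_exist_zero[OF hol open_ball connected_ball centre_in_ball[THEN iffD2, OF e] ne] by blast
    then show ?thesis using that by blast
  qed
  have "zor_poly h l0 holomorphic_on ball l0 rr" using rr(3) by (rule holomorphic_on_subset) auto
  then have an: "zor_poly h l0 analytic_on {l0}" using rr(1)
    by (intro holomorphic_on_imp_analytic_at[of _ "ball l0 rr"]) auto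
  have "\<forall>\<^sub>F z in nhds l0. h z = zor_poly h l0 z * (z - l0) ^ nat (zorder h l0)"
    using rr(1,4) by (intro eventually_nhds_in_open[THEN eventually_mono, of "ball l0 rr"]) auto
  moreover have "zor_poly h l0 l0 \<noteq> 0" using rr(1,4) by auto
  ultimately show ?thesis using an by blast
qed

definition vrep :: "nat \<Rightarrow> complex \<Rightarrow> (complex \<Rightarrow> complex vec) \<Rightarrow> nat \<Rightarrow> (complex \<Rightarrow> complex vec) \<Rightarrow> bool" where
  "vrep n l0 f k g \<longleftrightarrow> (\<forall>z. g z \<in> carrier_vec n) \<and>
      (\<forall>i<n. (\<lambda>z. g z $ i) analytic_on {l0}) \<and> g l0 \<noteq> 0\<^sub>v n \<and>
      (\<forall>\<^sub>F z in nhds l0. f z = (z - l0) ^ k \<cdot>\<^sub>v g z)"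

lemma zero_order_vec_vrep: "zero_order_vec n f l0 = (THE k. \<exists>g. vrep n l0 f k g)"
  unfolding zero_order_vec_def vrep_def ..

lemma vrep_less:
  assumes "vrep n l0 f k g" "vrep n l0 f k' g'"
  shows "\<not> k < k'"
proof
  assume kk: "k < k'"
  from assms(1) have gc: "\<And>z. g z \<in> carrier_vec n" and gan: "\<And>i. i<n \<Longrightarrow> (\<lambda>z. g z $ i) analytic_on {l0}"
    and g0: "g l0 \<noteq> 0\<^sub>v n" and ge: "\<forall>\<^sub>F z in nhds l0. f z = (z - l0) ^ k \<cdot>\<^sub>v g z"
    unfolding vrep_def by auto
  from assms(2) have gc': "\<And>z. g' z \<in> carrier_vec n" and gan': "\<And>i. i<n \<Longrightarrow> (\<lambda>z. g' z $ i) analytic_on {l0}"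
    and ge': "\<forall>\<^sub>F z in nhds l0. f z = (z - l0) ^ k' \<cdot>\<^sub>v g' z"
    unfolding vrep_def by auto
  obtain i where i: "i < n" "g l0 $ i \<noteq> 0"
    using g0 gc[of l0] by (metis eq_vecI carrier_vecD index_zero_vec(1) index_zero_vec(2))
  have nz: "\<forall>\<^sub>F z in at l0. z \<noteq> l0" by (simp add: eventually_at_filter)
  have "\<forall>\<^sub>F z in at l0. g z $ i = (z - l0) ^ (k' - k) * g' z $ i"
    using eventually_nhds_conv_at[THEN iffD1, OF ge, THEN conjunct1]
      eventually_nhds_conv_at[THEN iffD1, OF ge', THEN conjunct1] nz
  proof eventually_elim
    case (elim z)
    then have "(z - l0) ^ k * g z $ i = (z - l0) ^ k' * g' z $ i"
      using gc[of z] gc'[of z] i(1) by (metis index_smult_vec(1) carrier_vecD)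
    moreover have "(z - l0) ^ k' = (z - l0) ^ k * (z - l0) ^ (k' - k)"
      using kk by (simp add: power_add[symmetric])
    ultimately show ?case using elim(3) by simp
  qed
  then have "g l0 $ i = (l0 - l0) ^ (k' - k) * g' l0 $ i"
    by (intro cont_eq_at analytic_at_imp_isCont gan i(1) continuous_intros gan' analytic_intros)
  then show False using i(2) kk by simp
qed

lemma vrep_unique: "vrep n l0 f k g \<Longrightarrow> vrep n l0 f k' g' \<Longrightarrow> k = k'"
  using vrep_less[of n l0 f k g k' g'] vrep_less[of n l0 f k' g' k g] by linarith

lemma vec_rep:
  fixes f :: "complex \<Rightarrow> complex vec"
  assumes e: "e > 0" and fc: "\<And>z. f z \<in> carrier_vec n"
    and hol: "\<And>i. i < n \<Longrightarrow> (\<lambda>z. f z $ i) holomorphic_on ball l0 e"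
  shows "(\<forall>\<^sub>F z in nhds l0. f z = 0\<^sub>v n) \<or> (\<exists>k g. vrep n l0 f k g)"
proof -
  define NZ where "NZ = {i. i < n \<and> \<not> (\<forall>\<^sub>F z in nhds l0. f z $ i = 0)}"
  have "\<forall>i\<in>NZ. \<exists>k g. g analytic_on {l0} \<and> g l0 \<noteq> 0 \<and> (\<forall>\<^sub>F z in nhds l0. f z $ i = g z * (z - l0) ^ k)"
    using comp_rep[OF e hol] unfolding NZ_def by blast
  then obtain K G where KG: "\<And>i. i \<in> NZ \<Longrightarrow> G i analytic_on {l0} \<and> G i l0 \<noteq> 0 \<and>
      (\<forall>\<^sub>F z in nhds l0. f z $ i = G i z * (z - l0) ^ K i)"
    by metis
  have finNZ: "finite NZ" unfolding NZ_def by auto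
  show ?thesis
  proof (cases "NZ = {}")
    case True
    then have "\<forall>i\<in>{..<n}. \<forall>\<^sub>F z in nhds l0. f z $ i = 0" unfolding NZ_def by auto
    then have "\<forall>\<^sub>F z in nhds l0. \<forall>i\<in>{..<n}. f z $ i = 0" by (rule eventually_ball_finite[rotated]) auto
    then have "\<forall>\<^sub>F z in nhds l0. f z = 0\<^sub>v n"
      by (rule eventually_mono) (use fc in \<open>auto intro!: eq_vecI\<close>)
    then show ?thesis by blast
  next
    case False
    define k where "k = Min (K ` NZ)"
    have "k \<in> K ` NZ" unfolding k_def using finNZ False by (intro Min_in) auto
    then obtain i0 where i0: "i0 \<in> NZ" "K i0 = k" by auto
    have kle: "i \<in> NZ \<Longrightarrow> k \<le> K i" for i unfolding k_def using finNZ by auto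
    define g where "g z = vec n (\<lambda>i. if i \<in> NZ then G i z * (z - l0) ^ (K i - k) else 0)" for z
    have "vrep n l0 f k g"
      unfolding vrep_def
    proof (intro conjI allI impI)
      show "g z \<in> carrier_vec n" for z by (simp add: g_def)
      show "(\<lambda>z. g z $ i) analytic_on {l0}" if "i < n" for i
        using that KG by (cases "i \<in> NZ") (auto simp: g_def intro!: analytic_intros)
      show "g l0 \<noteq> 0\<^sub>v n"
      proof
        assume "g l0 = 0\<^sub>v n"
        then have "g l0 $ i0 = 0" using i0 NZ_def by auto
        then show False using i0 KG[of i0] NZ_def by (auto simp: g_def)
      qed
      have "\<forall>i\<in>{..<n}. \<forall>\<^sub>F z in nhds l0. f z $ i = (z - l0) ^ k * g z $ i"
      proof
        fix i assume "i \<in> {..<n}"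
        then have i: "i < n" by simp
        show "\<forall>\<^sub>F z in nhds l0. f z $ i = (z - l0) ^ k * g z $ i"
        proof (cases "i \<in> NZ")
          case True
          show ?thesis using KG[OF True]
          proof (elim conjE eventually_mono)
            fix z assume "f z $ i = G i z * (z - l0) ^ K i"
            moreover have "(z - l0) ^ K i = (z - l0) ^ k * (z - l0) ^ (K i - k)"
              using kle[OF True] by (simp add: power_add[symmetric])
            ultimately show "f z $ i = (z - l0) ^ k * g z $ i" using True i by (simp add: g_def)
          qed
        next
          case False
          then have "\<forall>\<^sub>F z in nhds l0. f z $ i = 0" using i NZ_def by auto
          then show ?thesis by (rule eventually_mono) (use False i in \<open>simp add: g_def\<close>)
        qed
      qed
      then have "\<forall>\<^sub>F z in nhds l0. \<forall>i\<in>{..<n}. f z $ i = (z - l0) ^ k * g z $ i"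
        by (rule eventually_ball_finite[rotated]) auto
      then show "\<forall>\<^sub>F z in nhds l0. f z = (z - l0) ^ k \<cdot>\<^sub>v g z"
        by (rule eventually_mono) (use fc in \<open>auto intro!: eq_vecI simp: g_def\<close>)
    qed
    then show ?thesis by blast
  qed
qed



lemma h0_shift: "h0 l0 (\<lambda>z. (z - l0) ^ p * f z) \<Longrightarrow> h0 l0 (\<lambda>z. (z - l0) ^ (p + q) * f z)"
proof -
  assume h: "h0 l0 (\<lambda>z. (z - l0) ^ p * f z)"
  have an: "(\<lambda>z. (z - l0) ^ q) analytic_on {l0}" by (intro analytic_intros)
  have "h0 l0 (\<lambda>z. (z - l0) ^ q * ((z - l0) ^ p * f z))"
    by (rule h0_mult[OF h0_an[OF an] h])
  then show ?thesis by (simp add: power_add mult_ac)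
qed

lemma mero_pole:
  assumes "f meromorphic_on \<Omega>" "l0 \<in> \<Omega>"
  shows "\<exists>p. h0 l0 (\<lambda>z. (z - l0) ^ p * f z)"
proof -
  have iso: "isolated_singularity_at f l0" and ne: "not_essential f l0"
    using assms meromorphic_on_altdef by blast+
  show ?thesis
  proof (cases "\<exists>\<^sub>F w in at l0. f w \<noteq> 0")
    case False
    then have "\<forall>\<^sub>F w in at l0. (w - l0) ^ 0 * f w = 0" by (simp add: not_frequently)
    then show ?thesis by (intro exI[of _ 0]) (rule h0_cong[OF _ h0_const])
  next
    case True
    obtain k :: int and g rr where g: "0 < rr" "g holomorphic_on cball l0 rr" "g l0 \<noteq> 0"
      "\<forall>w\<in>cball l0 rr - {l0}. f w = g w * (w - l0) powi k \<and> g w \<noteq> 0"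
      using holomorphic_factor_puncture[OF iso ne True] by blast
    have "g holomorphic_on ball l0 rr" using g(2) by (rule holomorphic_on_subset) auto
    then have gan: "g analytic_on {l0}" using g(1) by (intro holomorphic_on_imp_analytic_at[of _ "ball l0 rr"]) auto
    have ev: "\<forall>\<^sub>F w in at l0. w \<in> ball l0 rr - {l0}"
      using g(1) by (auto simp: eventually_at dist_commute intro!: exI[of _ rr])
    have "\<forall>\<^sub>F w in at l0. (w - l0) ^ nat (- k) * f w = g w * (w - l0) ^ nat k"
      using ev
    proof eventually_elim
      case (elim w)
      then have w: "w - l0 \<noteq> 0" "f w = g w * (w - l0) powi k" using g(4) by auto
      show ?case
      proof (cases "k \<ge> 0")
        case True then show ?thesis using w by (simp add: power_int_def)
      next
        case False
        then show ?thesis using w by (simp add: power_int_def power_inverse field_simps)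
      qed
    qed
    then have "h0 l0 (\<lambda>z. (z - l0) ^ nat (- k) * f z)"
      by (rule h0_cong) (intro h0_an analytic_intros gan)
    then show ?thesis by blast
  qed
qed

lemma inv_cancel: "(A::complex) \<noteq> 0 \<Longrightarrow> A * inverse (A * w) = inverse w"
  by (cases "w = 0") (auto simp: field_simps)

lemma pow_coef: "(w::complex) \<noteq> 0 \<Longrightarrow> a \<le> b + c \<Longrightarrow> w ^ b * (w ^ c * inverse (w ^ a)) = w ^ (b + c - a)"
proof -
  assume w: "w \<noteq> 0" and abc: "a \<le> b + c"
  have "w ^ b * w ^ c = w ^ (b + c - a) * w ^ a" using abc by (simp add: power_add[symmetric])
  then show ?thesis using w by (simp add: field_simps)
qed

locale cm =
  fixes \<Omega> :: "complex set" and l0 :: complex and n r :: nat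
    and T Y UL UR :: "complex \<Rightarrow> complex mat" and m :: "nat \<Rightarrow> nat"
  assumes opn: "open \<Omega>" and l0: "l0 \<in> \<Omega>"
    and Thol: "hol_mat n n \<Omega> T"
    and rdef: "r = kernel_dim (T l0)"
    and mono: "\<And>i j. i \<le> j \<Longrightarrow> j < n \<Longrightarrow> m j \<le> m i"
    and UL: "hol0_mat n l0 UL" and UR: "hol0_mat n l0 UR"
    and dUL: "det (UL l0) \<noteq> 0" and dUR: "det (UR l0) \<noteq> 0"
    and diag: "\<forall>\<^sub>F z in nhds l0. UL z * T z * UR z = mat_diag n (\<lambda>i. (z - l0) ^ m i)"
    and RC: "right_canonical_matrix n r \<Omega> T l0 m Y"
begin

lemma Tc: "T z \<in> carrier_mat n n" using Thol hol_mat_carrier by blast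
lemma Tan: "i < n \<Longrightarrow> j < n \<Longrightarrow> (\<lambda>z. T z $$ (i,j)) analytic_on {l0}"
  using hol_mat_an[OF Thol opn l0] by blast
lemma Yhol: "hol_mat n r \<Omega> Y" using RC unfolding right_canonical_matrix_def by blast
lemma Yc: "Y z \<in> carrier_mat n r" using Yhol hol_mat_carrier by blast
lemma Yan: "i < n \<Longrightarrow> j < r \<Longrightarrow> (\<lambda>z. Y z $$ (i,j)) analytic_on {l0}"
  using hol_mat_an[OF Yhol opn l0] by blast
lemma ULc: "UL z \<in> carrier_mat n n" using UL hol0_mat_carrier by blast
lemma URc: "UR z \<in> carrier_mat n n" using UR hol0_mat_carrier by blast
lemma ULan: "i < n \<Longrightarrow> j < n \<Longrightarrow> (\<lambda>z. UL z $$ (i,j)) analytic_on {l0}"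
  using UL hol0_mat_an by blast
lemma URan: "i < n \<Longrightarrow> j < n \<Longrightarrow> (\<lambda>z. UR z $$ (i,j)) analytic_on {l0}"
  using UR hol0_mat_an by blast

lemma Yindep: "c \<in> carrier_vec r \<Longrightarrow> Y l0 *\<^sub>v c = 0\<^sub>v n \<Longrightarrow> c = 0\<^sub>v r"
  using RC unfolding right_canonical_matrix_def by blast

definition nu :: "nat \<Rightarrow> nat" where
  "nu i = root_mult n T l0 (\<lambda>z. col (Y z) i)"

lemma nu_sum: "(\<Sum>i<r. nu i) = (\<Sum>i<r. m i)"
  using RC unfolding right_canonical_matrix_def nu_def by blast

lemma nu_sorted: "i \<le> j \<Longrightarrow> j < r \<Longrightarrow> nu j \<le> nu i"
  using RC unfolding right_canonical_matrix_def nu_def by blast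

definition ordge :: "(complex \<Rightarrow> complex vec) \<Rightarrow> nat \<Rightarrow> bool" where
  "ordge f p \<longleftrightarrow> (\<exists>g. (\<forall>z. g z \<in> carrier_vec n) \<and> (\<forall>l<n. (\<lambda>z. g z $ l) analytic_on {l0}) \<and>
     (\<forall>\<^sub>F z in at l0. f z = (z - l0) ^ p \<cdot>\<^sub>v g z))"

lemma ordge_mono:
  assumes "ordge f p" "q \<le> p" shows "ordge f q"
proof -
  obtain g where g: "\<forall>z. g z \<in> carrier_vec n" "\<forall>l<n. (\<lambda>z. g z $ l) analytic_on {l0}"
    "\<forall>\<^sub>F z in at l0. f z = (z - l0) ^ p \<cdot>\<^sub>v g z" using assms(1) ordge_def by auto
  define g' where "g' z = (z - l0) ^ (p - q) \<cdot>\<^sub>v g z" for z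
  have "(z - l0) ^ p \<cdot>\<^sub>v g z = (z - l0) ^ q \<cdot>\<^sub>v g' z" for z
  proof -
    have "(z - l0) ^ p = (z - l0) ^ q * (z - l0) ^ (p - q)"
      using assms(2) by (simp add: power_add[symmetric])
    then show ?thesis unfolding g'_def by (simp add: smult_smult_assoc)
  qed
  moreover have "\<forall>l<n. (\<lambda>z. g' z $ l) analytic_on {l0}"
  proof (intro allI impI)
    fix l assume l: "l < n"
    have "(\<lambda>z. g' z $ l) = (\<lambda>z. (z - l0) ^ (p - q) * g z $ l)"
    proof
      fix z have "dim_vec (g z) = n" using g(1) by auto
      then show "g' z $ l = (z - l0) ^ (p - q) * g z $ l" using l by (simp add: g'_def)
    qed
    then show "(\<lambda>z. g' z $ l) analytic_on {l0}" using g(2) l by (auto intro!: analytic_intros)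
  qed
  moreover have "\<forall>z. g' z \<in> carrier_vec n" using g(1) unfolding g'_def by auto
  ultimately show ?thesis unfolding ordge_def using g(3) by (auto elim!: eventually_mono)
qed

lemma sum_single_if: "l < (k::nat) \<Longrightarrow> (\<Sum>j<k. (if l = j then a j else 0) * b j) = a l * (b l :: complex)"
proof -
  assume l: "l < k"
  have "(\<Sum>j<k. (if l = j then a j else 0) * b j) = (\<Sum>j<k. if l = j then a j * b j else 0)"
    by (intro sum.cong) auto
  also have "\<dots> = a l * b l" using l by (simp add: sum.delta)
  finally show ?thesis .
qed

lemma diag_mv: "(x :: complex vec) \<in> carrier_vec k \<Longrightarrow> l < k \<Longrightarrow> (mat_diag k f *\<^sub>v x) $ l = f l * x $ l"
proof -
  assume x: "x \<in> carrier_vec k" and l: "l < k"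
  have "(mat_diag k f *\<^sub>v x) $ l = (\<Sum>j<k. mat_diag k f $$ (l,j) * x $ j)"
    by (rule mv_index[OF _ x l]) simp
  also have "\<dots> = (\<Sum>j<k. (if l = j then f j else 0) * x $ j)"
    using l by (intro sum.cong) (auto simp: mat_diag_def)
  also have "\<dots> = f l * x $ l" using sum_single_if[OF l, of f "\<lambda>j. x $ j"] by simp
  finally show ?thesis .
qed

lemma smult_one_mv: "x \<in> carrier_vec k \<Longrightarrow> (c \<cdot>\<^sub>m 1\<^sub>m k) *\<^sub>v x = c \<cdot>\<^sub>v (x :: complex vec)"
proof (intro eq_vecI)
  fix l assume x: "x \<in> carrier_vec k" and "l < dim_vec (c \<cdot>\<^sub>v x)"
  then have l: "l < k" by simp
  show "((c \<cdot>\<^sub>m 1\<^sub>m k) *\<^sub>v x) $ l = (c \<cdot>\<^sub>v x) $ l"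
  proof -
    have "((c \<cdot>\<^sub>m 1\<^sub>m k) *\<^sub>v x) $ l = (\<Sum>j<k. (c \<cdot>\<^sub>m 1\<^sub>m k) $$ (l,j) * x $ j)"
      by (rule mv_index[OF _ x l]) simp
    also have "\<dots> = (\<Sum>j<k. (if l = j then c else 0) * x $ j)"
      using l by (intro sum.cong) auto
    also have "\<dots> = c * x $ l" using sum_single_if[OF l, of "\<lambda>_. c"] by simp
    finally show ?thesis using x l by simp
  qed
qed simp

lemma KL:
  fixes u :: "complex \<Rightarrow> complex vec"
  assumes uc: "\<And>z. u z \<in> carrier_vec n" and uan: "\<And>l. l < n \<Longrightarrow> (\<lambda>z. u z $ l) analytic_on {l0}"
    and ord: "ordge (\<lambda>z. T z *\<^sub>v u z) p"
  shows "\<exists>w\<in>carrier_vec n. u l0 = UR l0 *\<^sub>v w \<and> (\<forall>l<n. m l < p \<longrightarrow> w $ l = 0)"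
proof -
  obtain g where gc: "\<And>z. g z \<in> carrier_vec n" and gan: "\<And>l. l<n \<Longrightarrow> (\<lambda>z. g z $ l) analytic_on {l0}"
    and ge: "\<forall>\<^sub>F z in at l0. T z *\<^sub>v u z = (z - l0)^p \<cdot>\<^sub>v g z" using ord ordge_def by auto
  define d where "d z = det (UR z)" for z
  define wt where "wt z = adj_mat (UR z) *\<^sub>v u z" for z
  have adjc: "adj_mat (UR z) \<in> carrier_mat n n" for z using adj_mat(1)[OF URc] .
  have wtc: "wt z \<in> carrier_vec n" for z using adjc[of z] uc[of z] unfolding wt_def by simp
  have wtan: "l < n \<Longrightarrow> (\<lambda>z. wt z $ l) analytic_on {l0}" for l
    unfolding wt_def by (rule mv_analytic[OF adjc adj_analytic[OF URc URan] uc uan])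
  have dan: "d analytic_on {l0}" unfolding d_def by (rule det_analytic[OF URc URan])
  have URwt: "UR z *\<^sub>v wt z = d z \<cdot>\<^sub>v u z" for z
  proof -
    have "UR z *\<^sub>v wt z = (UR z * adj_mat (UR z)) *\<^sub>v u z"
      unfolding wt_def using assoc_mult_mat_vec[OF URc adjc uc] by simp
    also have "\<dots> = (d z \<cdot>\<^sub>m 1\<^sub>m n) *\<^sub>v u z" using adj_mat(2)[OF URc] d_def by simp
    also have "\<dots> = d z \<cdot>\<^sub>v u z" by (rule smult_one_mv[OF uc])
    finally show ?thesis .
  qed
  have diag_at: "\<forall>\<^sub>F z in at l0. UL z * T z * UR z = mat_diag n (\<lambda>i. (z - l0) ^ m i)"
    using diag by (simp add: eventually_nhds_conv_at)
  have Gan: "(\<lambda>z. (UL z *\<^sub>v g z) $ l) analytic_on {l0}" if "l < n" for l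
    by (rule mv_analytic[OF ULc ULan gc gan that])
  have key: "\<forall>\<^sub>F z in at l0. \<forall>l<n. (z - l0) ^ m l * wt z $ l = d z * (z - l0) ^ p * (UL z *\<^sub>v g z) $ l"
    using ge diag_at
  proof eventually_elim
    case (elim z)
    have "(UL z * T z * UR z) *\<^sub>v wt z = UL z *\<^sub>v (T z *\<^sub>v (UR z *\<^sub>v wt z))"
      using assoc_mult_mat_vec[OF mult_carrier_mat[OF ULc Tc] URc wtc]
        assoc_mult_mat_vec[OF ULc Tc mult_mat_vec_carrier[OF URc wtc]] by simp
    also have "\<dots> = UL z *\<^sub>v (d z \<cdot>\<^sub>v ((z - l0)^p \<cdot>\<^sub>v g z))"
      unfolding URwt using mult_mat_vec[OF Tc uc] elim(1) by simp
    also have "\<dots> = (d z * (z - l0)^p) \<cdot>\<^sub>v (UL z *\<^sub>v g z)"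
      using mult_mat_vec[OF ULc] gc by (simp add: smult_smult_assoc)
    finally have eq: "mat_diag n (\<lambda>i. (z - l0) ^ m i) *\<^sub>v wt z = (d z * (z - l0)^p) \<cdot>\<^sub>v (UL z *\<^sub>v g z)"
      using elim(2) by simp
    show ?case
    proof (intro allI impI)
      fix l assume l: "l < n"
      have "(z - l0) ^ m l * wt z $ l = (mat_diag n (\<lambda>i. (z - l0) ^ m i) *\<^sub>v wt z) $ l"
        using diag_mv[OF wtc l] by simp
      also have "\<dots> = d z * (z - l0) ^ p * (UL z *\<^sub>v g z) $ l"
        unfolding eq using l ULc[of z] gc[of z] by simp
      finally show "(z - l0) ^ m l * wt z $ l = d z * (z - l0) ^ p * (UL z *\<^sub>v g z) $ l" .
    qed
  qed
  have nz: "\<forall>\<^sub>F z in at l0. z \<noteq> l0" by (simp add: eventually_at_filter)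
  have wt0: "wt l0 $ l = 0" if l: "l < n" "m l < p" for l
  proof -
    have "\<forall>\<^sub>F z in at l0. wt z $ l = (z - l0) ^ (p - m l) * d z * (UL z *\<^sub>v g z) $ l"
      using key nz
    proof (eventually_elim)
      case (elim z)
      then have z: "z \<noteq> l0" by simp
      have pe: "(z - l0) ^ p = (z - l0) ^ m l * (z - l0) ^ (p - m l)"
        using l(2) by (simp add: power_add[symmetric])
      have "(z - l0) ^ m l * wt z $ l = (z - l0) ^ m l * ((z - l0) ^ (p - m l) * d z * (UL z *\<^sub>v g z) $ l)"
        using elim(1) l(1) unfolding pe by (simp add: algebra_simps)
      then show ?case using z by simp
    qed
    moreover have "isCont (\<lambda>z. wt z $ l) l0" using analytic_at_imp_isCont[OF wtan[OF l(1)]] .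
    moreover have "isCont (\<lambda>z. (z - l0) ^ (p - m l) * d z * (UL z *\<^sub>v g z) $ l) l0"
      by (intro continuous_intros analytic_at_imp_isCont dan Gan l(1))
    ultimately have "wt l0 $ l = (l0 - l0) ^ (p - m l) * d l0 * (UL l0 *\<^sub>v g l0) $ l"
      by (intro cont_eq_at) auto
    then show ?thesis using l(2) by simp
  qed
  define w where "w = inverse (d l0) \<cdot>\<^sub>v wt l0"
  have "UR l0 *\<^sub>v w = inverse (d l0) \<cdot>\<^sub>v (d l0 \<cdot>\<^sub>v u l0)"
    unfolding w_def using mult_mat_vec[OF URc wtc] URwt by simp
  also have "\<dots> = u l0" using dUR d_def by (simp add: smult_smult_assoc)
  finally show ?thesis using wt0 wtc[of l0] by (intro bexI[of _ w]) (auto simp: w_def)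
qed

lemma colY_c: "col (Y z) i \<in> carrier_vec n" using Yc[of z] by (simp add: carrier_dim_vec)

lemma colY_index: "l < n \<Longrightarrow> i < r \<Longrightarrow> col (Y z) i $ l = Y z $$ (l,i)"
  using Yc[of z] by simp

lemma colY_an: "l < n \<Longrightarrow> i < r \<Longrightarrow> (\<lambda>z. col (Y z) i $ l) analytic_on {l0}"
  using Yan colY_index by simp

lemma comp_TY: "l < n \<Longrightarrow> i < r \<Longrightarrow> (T z *\<^sub>v col (Y z) i) $ l = (\<Sum>j<n. T z $$ (l,j) * Y z $$ (j,i))"
  using mv_index[OF Tc colY_c] colY_index by simp

lemma ordge_root:
  assumes i: "i < r" shows "ordge (\<lambda>z. T z *\<^sub>v col (Y z) i) (nu i)"
proof -
  let ?f = "\<lambda>z. T z *\<^sub>v col (Y z) i"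
  obtain e where e: "e > 0" "ball l0 e \<subseteq> \<Omega>" using opn l0 openE by blast
  have fc: "?f z \<in> carrier_vec n" for z using Tc[of z] by (simp add: carrier_dim_vec)
  have hol: "(\<lambda>z. ?f z $ l) holomorphic_on ball l0 e" if l: "l < n" for l
  proof -
    have "(\<lambda>z. ?f z $ l) = (\<lambda>z. \<Sum>j<n. T z $$ (l,j) * Y z $$ (j,i))" using comp_TY l i by auto
    moreover have "(\<lambda>z. \<Sum>j<n. T z $$ (l,j) * Y z $$ (j,i)) holomorphic_on \<Omega>"
      using Thol Yhol l i unfolding hol_mat_def by (intro holomorphic_intros) auto
    ultimately show ?thesis using e(2) holomorphic_on_subset by metis
  qed
  from vec_rep[OF e(1) fc hol]
  show ?thesis
  proof
    assume ev: "\<forall>\<^sub>F z in nhds l0. ?f z = 0\<^sub>v n"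
    have z0: "(z - l0) ^ nu i \<cdot>\<^sub>v 0\<^sub>v n = 0\<^sub>v n" for z by (intro eq_vecI) auto
    have "\<forall>\<^sub>F z in at l0. ?f z = (z - l0) ^ nu i \<cdot>\<^sub>v 0\<^sub>v n"
      unfolding z0 using ev by (simp add: eventually_nhds_conv_at)
    then show ?thesis unfolding ordge_def
      by (intro exI[of _ "\<lambda>z. 0\<^sub>v n"]) auto
  next
    assume "\<exists>k g. vrep n l0 ?f k g"
    then obtain k g where kg: "vrep n l0 ?f k g" by blast
    have "\<exists>!k. \<exists>g. vrep n l0 ?f k g"
    proof (rule ex1I[of _ k])
      show "\<exists>g. vrep n l0 ?f k g" using kg by blast
    next
      fix k' assume "\<exists>g. vrep n l0 ?f k' g"
      then obtain g' where "vrep n l0 ?f k' g'" by blast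
      then show "k' = k" using vrep_unique[OF _ kg] by blast
    qed
    then have "\<exists>g. vrep n l0 ?f (nu i) g"
      unfolding nu_def root_mult_def zero_order_vec_vrep by (rule theI')
    then show ?thesis unfolding ordge_def vrep_def by (auto simp: eventually_nhds_conv_at)
  qed
qed

definition s :: "nat \<Rightarrow> nat" where "s p = (LEAST l. l = n \<or> (l < n \<and> m l < p))"

lemma s_le: "s p \<le> n"
  unfolding s_def by (rule Least_le) simp

lemma s_char: assumes l: "l < n" shows "p \<le> m l \<longleftrightarrow> l < s p"
proof
  assume "p \<le> m l"
  show "l < s p"
  proof (rule ccontr)
    assume "\<not> l < s p"
    then have sl: "s p \<le> l" by simp
    have "s p = n \<or> (s p < n \<and> m (s p) < p)"
      unfolding s_def by (rule LeastI[of _ n]) simp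
    then show False using sl l mono[of "s p" l] \<open>p \<le> m l\<close> by auto
  qed
next
  assume "l < s p"
  then have "\<not> (l = n \<or> (l < n \<and> m l < p))" unfolding s_def by (rule not_less_Least)
  then show "p \<le> m l" using l by auto
qed

lemma indep_W:
  assumes k: "k \<le> r" and W: "\<And>j. j < k \<Longrightarrow> W j \<in> carrier_vec n \<and> col (Y l0) j = UR l0 *\<^sub>v W j"
    and c: "\<forall>l<n. (\<Sum>j<k. c j * W j $ l) = 0"
  shows "\<forall>j<k. c j = 0"
proof -
  define cv where "cv = vec r (\<lambda>j. if j < k then c j else 0)"
  have cvc: "cv \<in> carrier_vec r" by (simp add: cv_def)
  have "Y l0 *\<^sub>v cv = 0\<^sub>v n"
  proof (rule eq_vecI)
    fix l assume "l < dim_vec (0\<^sub>v n :: complex vec)"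
    then have l: "l < n" by simp
    have "(Y l0 *\<^sub>v cv) $ l = (\<Sum>j<r. Y l0 $$ (l,j) * cv $ j)" by (rule mv_index[OF Yc cvc l])
    also have "\<dots> = (\<Sum>j<k. Y l0 $$ (l,j) * c j)"
    proof -
      have "(\<Sum>j<r. Y l0 $$ (l,j) * cv $ j) = (\<Sum>j<k. Y l0 $$ (l,j) * cv $ j)"
        using k by (intro sum.mono_neutral_right) (auto simp: cv_def)
      also have "\<dots> = (\<Sum>j<k. Y l0 $$ (l,j) * c j)" using k by (intro sum.cong) (auto simp: cv_def)
      finally show ?thesis .
    qed
    also have "\<dots> = (\<Sum>j<k. (\<Sum>q<n. UR l0 $$ (l,q) * W j $ q) * c j)"
    proof (intro sum.cong refl)
      fix j assume "j \<in> {..<k}"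
      then have j: "j < k" by simp
      have "Y l0 $$ (l,j) = col (Y l0) j $ l" using colY_index[OF l] j k by simp
      also have "\<dots> = (UR l0 *\<^sub>v W j) $ l" using W[OF j] by simp
      also have "\<dots> = (\<Sum>q<n. UR l0 $$ (l,q) * W j $ q)" using mv_index[OF URc _ l] W[OF j] by simp
      finally show "Y l0 $$ (l,j) * c j = (\<Sum>q<n. UR l0 $$ (l,q) * W j $ q) * c j" by simp
    qed
    also have "\<dots> = (\<Sum>j<k. \<Sum>q<n. UR l0 $$ (l,q) * (c j * W j $ q))"
      by (simp add: sum_distrib_left sum_distrib_right mult_ac)
    also have "\<dots> = (\<Sum>q<n. \<Sum>j<k. UR l0 $$ (l,q) * (c j * W j $ q))"
      by (rule sum.swap)
    also have "\<dots> = (\<Sum>q<n. UR l0 $$ (l,q) * (\<Sum>j<k. c j * W j $ q))"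
      by (simp add: sum_distrib_left)
    also have "\<dots> = 0" using c by simp
    finally show "(Y l0 *\<^sub>v cv) $ l = 0\<^sub>v n $ l" using l by simp
  qed (use Yc[of l0] in simp)
  then have "cv = 0\<^sub>v r" by (rule Yindep[OF cvc])
  then show ?thesis
  proof (intro allI impI)
    fix j assume "cv = 0\<^sub>v r" "j < k"
    then have "cv $ j = 0" using k by simp
    then show "c j = 0" using \<open>j < k\<close> k by (simp add: cv_def)
  qed
qed

lemma nu_le: assumes i: "i < r" shows "nu i \<le> m i"
proof (cases "nu i = 0")
  case True then show ?thesis by simp
next
  case False
  define p where "p = nu i"
  have "\<forall>j\<in>{..<Suc i}. \<exists>w. w \<in> carrier_vec n \<and> col (Y l0) j = UR l0 *\<^sub>v w \<and> (\<forall>l<n. m l < p \<longrightarrow> w $ l = 0)"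
  proof
    fix j assume "j \<in> {..<Suc i}"
    then have j: "j \<le> i" by simp
    then have jr: "j < r" using i by simp
    have "ordge (\<lambda>z. T z *\<^sub>v col (Y z) j) p"
      unfolding p_def by (rule ordge_mono[OF ordge_root[OF jr] nu_sorted[OF j i]])
    from KL[OF colY_c colY_an[OF _ jr] this] show "\<exists>w. w \<in> carrier_vec n \<and> col (Y l0) j = UR l0 *\<^sub>v w \<and> (\<forall>l<n. m l < p \<longrightarrow> w $ l = 0)"
      by blast
  qed
  from bchoice[OF this] obtain W where W': "\<forall>j\<in>{..<Suc i}. W j \<in> carrier_vec n \<and> col (Y l0) j = UR l0 *\<^sub>v W j \<and> (\<forall>l<n. m l < p \<longrightarrow> W j $ l = 0)"
    by blast
  have W: "W j \<in> carrier_vec n \<and> col (Y l0) j = UR l0 *\<^sub>v W j \<and> (\<forall>l<n. m l < p \<longrightarrow> W j $ l = 0)"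
    if "j < Suc i" for j using W' that by simp
  have zeroW: "W j $ l = 0" if "j < Suc i" "s p \<le> l" "l < n" for j l
  proof -
    have "m l < p" using s_char[of l p] that by simp
    then show "W j $ l = 0" using W[OF \<open>j < Suc i\<close>] \<open>l < n\<close> by blast
  qed
  have Wc: "W j \<in> carrier_vec n \<and> col (Y l0) j = UR l0 *\<^sub>v W j" if "j < Suc i" for j
    using W[OF that] by blast
  have si: "Suc i \<le> r" using i by simp
  have indW: "\<forall>j<Suc i. c j = 0" if "\<forall>l<n. (\<Sum>j<Suc i. c j * W j $ l) = 0" for c
    by (rule indep_W[OF si Wc that])
  have "Suc i \<le> s p"
    by (rule LA1[where x = "\<lambda>j l. W j $ l" and k = "Suc i" and n = n, OF zeroW indW])
  then have "i < s p" by simp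
  moreover have "i < n" using \<open>i < s p\<close> s_le[of p] by simp
  ultimately have "p \<le> m i" using s_char[of i p] by simp
  then show ?thesis unfolding p_def .
qed

lemma nu_eq: assumes i: "i < r" shows "nu i = m i"
proof (rule ccontr)
  assume "nu i \<noteq> m i"
  then have "nu i < m i" using nu_le[OF i] by simp
  then have "(\<Sum>j<r. nu j) < (\<Sum>j<r. m j)"
    using nu_le i by (intro sum_strict_mono_ex1) auto
  then show False using nu_sum by simp
qed

lemma ordge_m: "i < r \<Longrightarrow> ordge (\<lambda>z. T z *\<^sub>v col (Y z) i) (m i)"
  using ordge_root nu_eq by simp

lemma s1_le_r: "s 1 \<le> r"
proof -
  let ?T0 = "T l0" and ?U = "UR l0"
  define x where "x l = ?U *\<^sub>v unit_vec n l" for l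
  have xc: "x l \<in> carrier_vec n" for l using URc[of l0] by (simp add: x_def carrier_dim_vec)
  have D0: "UL l0 * T l0 * UR l0 = mat_diag n (\<lambda>i. (l0 - l0) ^ m i)"
    using eventually_nhds_x_imp_x[OF diag] .
  have ULinj: "v = 0\<^sub>v n" if "v \<in> carrier_vec n" "UL l0 *\<^sub>v v = 0\<^sub>v n" for v
    using det_0_iff_vec_prod_zero[OF ULc, of l0] dUL that by blast
  have URinj: "v = 0\<^sub>v n" if "v \<in> carrier_vec n" "UR l0 *\<^sub>v v = 0\<^sub>v n" for v
    using det_0_iff_vec_prod_zero[OF URc, of l0] dUR that by blast
  have xidx: "x l $ q = ?U $$ (q,l)" if "l < n" "q < n" for l q
  proof -
    have "x l $ q = (\<Sum>t<n. ?U $$ (q,t) * unit_vec n l $ t)"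
      unfolding x_def by (rule mv_index[OF URc _ that(2)]) simp
    also have "\<dots> = (\<Sum>t<n. if t = l then ?U $$ (q,t) else 0)"
      using that by (intro sum.cong) auto
    also have "\<dots> = ?U $$ (q,l)" using that by simp
    finally show ?thesis .
  qed
  have ker: "x l \<in> mat_kernel ?T0" if l: "l < s 1" for l
  proof -
    have ln: "l < n" using l s_le[of 1] by simp
    have ml: "1 \<le> m l" using s_char[OF ln, of 1] l by simp
    have "UL l0 *\<^sub>v (?T0 *\<^sub>v x l) = (UL l0 * ?T0) *\<^sub>v x l"
      by (rule assoc_mult_mat_vec[OF ULc Tc xc, symmetric])
    also have "\<dots> = (UL l0 * ?T0 * ?U) *\<^sub>v unit_vec n l"
      unfolding x_def by (rule assoc_mult_mat_vec[OF mult_carrier_mat[OF ULc Tc] URc, symmetric]) simp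
    also have "\<dots> = 0\<^sub>v n"
    proof (rule eq_vecI)
      fix q assume "q < dim_vec (0\<^sub>v n :: complex vec)"
      then have q: "q < n" by simp
      have "((UL l0 * ?T0 * ?U) *\<^sub>v unit_vec n l) $ q = (l0 - l0) ^ m q * unit_vec n l $ q"
        unfolding D0 by (rule diag_mv[OF _ q]) simp
      also have "\<dots> = 0" using ml ln q by (cases "q = l") (auto simp: power_0_left)
      finally show "((UL l0 * ?T0 * ?U) *\<^sub>v unit_vec n l) $ q = 0\<^sub>v n $ q" using q by simp
    qed (use ULc[of l0] in simp)
    finally have "UL l0 *\<^sub>v (?T0 *\<^sub>v x l) = 0\<^sub>v n" .
    then have "?T0 *\<^sub>v x l = 0\<^sub>v n" by (rule ULinj[rotated]) (use Tc[of l0] xc[of l] in simp)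
    then show ?thesis by (rule mat_kernelI[OF Tc xc])
  qed
  interpret K: kernel n n "T l0" by unfold_locales (rule Tc)
  define X where "X = x ` {..<s 1}"
  have inj: "inj_on x {..<s 1}"
  proof (rule inj_onI)
    fix a b assume a: "a \<in> {..<s 1}" and b: "b \<in> {..<s 1}" and ab: "x a = x b"
    have an: "a < n" "b < n" using a b s_le[of 1] by auto
    have "?U *\<^sub>v (unit_vec n a - unit_vec n b) = 0\<^sub>v n"
      using mult_minus_distrib_mat_vec[OF URc, of "unit_vec n a" "unit_vec n b"] ab xc[of a]
      by (simp add: x_def)
    then have "unit_vec n a - unit_vec n b = (0\<^sub>v n :: complex vec)" by (rule URinj[rotated]) simp
    then have "(unit_vec n a - unit_vec n b) $ a = (0\<^sub>v n :: complex vec) $ a" by simp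
    then show "a = b" using an by (auto split: if_splits)
  qed
  have sub: "X \<subseteq> mat_kernel (T l0)" using ker X_def by auto
  have fin: "finite X" unfolding X_def by simp
  have indpt: "K.lin_indpt X"
  proof (rule K.Ker.finite_lin_indpt2[OF fin sub])
    fix a assume "a \<in> X \<rightarrow> UNIV" and lc: "K.lincomb a X = 0\<^sub>v n"
    have comb: "(\<Sum>l<s 1. ?U $$ (q,l) * a (x l)) = 0" if q: "q < n" for q
    proof -
      have "0 = K.lincomb a X $ q" using lc q by simp
      also have "\<dots> = (\<Sum>v\<in>X. a v * v $ q)" by (rule K.lincomb_index[OF q sub])
      also have "\<dots> = (\<Sum>l<s 1. a (x l) * x l $ q)" unfolding X_def by (rule sum.reindex[OF inj, unfolded comp_def])
      also have "\<dots> = (\<Sum>l<s 1. ?U $$ (q,l) * a (x l))"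
      proof (intro sum.cong refl)
        fix l assume "l \<in> {..<s 1}"
        then have "l < n" using s_le[of 1] by simp
        then show "a (x l) * x l $ q = ?U $$ (q,l) * a (x l)" using xidx q by simp
      qed
      finally show ?thesis by simp
    qed
    define cv where "cv = vec n (\<lambda>l. if l < s 1 then a (x l) else 0)"
    have cvc: "cv \<in> carrier_vec n" by (simp add: cv_def)
    have "?U *\<^sub>v cv = 0\<^sub>v n"
    proof (rule eq_vecI)
      fix q assume "q < dim_vec (0\<^sub>v n :: complex vec)"
      then have q: "q < n" by simp
      have "(?U *\<^sub>v cv) $ q = (\<Sum>l<n. ?U $$ (q,l) * cv $ l)" by (rule mv_index[OF URc cvc q])
      also have "\<dots> = (\<Sum>l<s 1. ?U $$ (q,l) * cv $ l)"
        using s_le[of 1] by (intro sum.mono_neutral_right) (auto simp: cv_def)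
      also have "\<dots> = (\<Sum>l<s 1. ?U $$ (q,l) * a (x l))"
        using s_le[of 1] by (intro sum.cong) (auto simp: cv_def)
      also have "\<dots> = 0" by (rule comb[OF q])
      finally show "(?U *\<^sub>v cv) $ q = 0\<^sub>v n $ q" using q by simp
    qed (use URc[of l0] in simp)
    then have cv0: "cv = 0\<^sub>v n" by (rule URinj[OF cvc])
    show "\<forall>v\<in>X. a v = 0"
    proof
      fix v assume "v \<in> X"
      then obtain l where l: "l < s 1" "v = x l" unfolding X_def by auto
      then have "cv $ l = 0" using cv0 s_le[of 1] by simp
      then show "a v = 0" using l s_le[of 1] by (simp add: cv_def)
    qed
  qed
  have fd: "K.Ker.fin_dim"
  proof -
    obtain B where "finite B" "K.basis B" using kernel_basis_exists[OF Tc] by blast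
    then show ?thesis unfolding K.Ker.fin_dim_def K.Ker.basis_def by blast
  qed
  have "card X \<le> K.dim" by (rule K.Ker.li_le_dim(2)[OF fd sub indpt])
  moreover have "card X = s 1" unfolding X_def using card_image[OF inj] by simp
  moreover have "K.dim = r" using K.kernel_dim rdef by simp
  ultimately show ?thesis by simp
qed

lemma s_mono1: assumes "1 \<le> p" shows "s p \<le> s 1"
proof (rule ccontr)
  assume "\<not> s p \<le> s 1"
  then have lt: "s 1 < s p" by simp
  then have n1: "s 1 < n" using s_le[of p] by simp
  then have "p \<le> m (s 1)" using s_char[OF n1, of p] lt by simp
  then have "1 \<le> m (s 1)" using assms by simp
  then show False using s_char[OF n1, of 1] by simp
qed

lemma sp_le_r: "1 \<le> p \<Longrightarrow> s p \<le> r" using s_mono1 s1_le_r by (meson le_trans)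

lemma span_pt:
  fixes u :: "complex \<Rightarrow> complex vec"
  assumes uc: "\<And>z. u z \<in> carrier_vec n" and uan: "\<And>l. l < n \<Longrightarrow> (\<lambda>z. u z $ l) analytic_on {l0}"
    and ord: "ordge (\<lambda>z. T z *\<^sub>v u z) p" and p: "1 \<le> p"
  shows "\<exists>a. \<forall>l<n. u l0 $ l = (\<Sum>j<s p. a j * Y l0 $$ (l,j))"
proof -
  have spr: "s p \<le> r" by (rule sp_le_r[OF p])
  obtain w where wc: "w \<in> carrier_vec n" and uw: "u l0 = UR l0 *\<^sub>v w"
    and w0: "\<And>l. l < n \<Longrightarrow> m l < p \<Longrightarrow> w $ l = 0"
    using KL[OF uc uan ord] by blast
  have "\<forall>j\<in>{..<s p}. \<exists>w. w \<in> carrier_vec n \<and> col (Y l0) j = UR l0 *\<^sub>v w \<and> (\<forall>l<n. m l < p \<longrightarrow> w $ l = 0)"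
  proof
    fix j assume "j \<in> {..<s p}"
    then have j: "j < s p" by simp
    then have jr: "j < r" using spr by simp
    have jn: "j < n" using j s_le[of p] by simp
    have "p \<le> m j" using s_char[OF jn, of p] j by simp
    then have "ordge (\<lambda>z. T z *\<^sub>v col (Y z) j) p" by (rule ordge_mono[OF ordge_m[OF jr]])
    from KL[OF colY_c colY_an[OF _ jr] this] show "\<exists>w. w \<in> carrier_vec n \<and> col (Y l0) j = UR l0 *\<^sub>v w \<and> (\<forall>l<n. m l < p \<longrightarrow> w $ l = 0)"
      by blast
  qed
  from bchoice[OF this] obtain W where W': "\<forall>j\<in>{..<s p}. W j \<in> carrier_vec n \<and> col (Y l0) j = UR l0 *\<^sub>v W j \<and> (\<forall>l<n. m l < p \<longrightarrow> W j $ l = 0)"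
    by blast
  have W: "W j \<in> carrier_vec n \<and> col (Y l0) j = UR l0 *\<^sub>v W j \<and> (\<forall>l<n. m l < p \<longrightarrow> W j $ l = 0)"
    if "j < s p" for j using W' that by simp
  have zeroW: "W j $ l = 0" if "j < s p" "s p \<le> l" "l < n" for j l
  proof -
    have "m l < p" using s_char[of l p] that by simp
    then show "W j $ l = 0" using W[OF \<open>j < s p\<close>] \<open>l < n\<close> by blast
  qed
  have Wc: "W j \<in> carrier_vec n \<and> col (Y l0) j = UR l0 *\<^sub>v W j" if "j < s p" for j
    using W[OF that] by blast
  have indW: "\<forall>j<s p. c j = 0" if "\<forall>l<n. (\<Sum>j<s p. c j * W j $ l) = 0" for c
    by (rule indep_W[OF spr Wc that])
  have wz: "w $ l = 0" if "s p \<le> l" "l < n" for l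
    using w0[OF that(2)] s_char[of l p] that by simp
  obtain c where c: "\<And>l. l < n \<Longrightarrow> w $ l = (\<Sum>j<s p. c j * W j $ l)"
    using LA2[where x = "\<lambda>j l. W j $ l" and s = "s p" and n = n and w = "\<lambda>l. w $ l", OF zeroW indW s_le wz]
    by blast
  show ?thesis
  proof (intro exI[of _ c] allI impI)
    fix l assume l: "l < n"
    have "u l0 $ l = (\<Sum>q<n. UR l0 $$ (l,q) * w $ q)" unfolding uw by (rule mv_index[OF URc wc l])
    also have "\<dots> = (\<Sum>q<n. UR l0 $$ (l,q) * (\<Sum>j<s p. c j * W j $ q))"
      using c by simp
    also have "\<dots> = (\<Sum>q<n. \<Sum>j<s p. c j * (UR l0 $$ (l,q) * W j $ q))"
      by (simp add: sum_distrib_left mult_ac)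
    also have "\<dots> = (\<Sum>j<s p. \<Sum>q<n. c j * (UR l0 $$ (l,q) * W j $ q))"
      by (rule sum.swap)
    also have "\<dots> = (\<Sum>j<s p. c j * Y l0 $$ (l,j))"
    proof (intro sum.cong refl)
      fix j assume "j \<in> {..<s p}"
      then have j: "j < s p" by simp
      have "Y l0 $$ (l,j) = col (Y l0) j $ l" using colY_index[OF l] j spr by simp
      also have "\<dots> = (UR l0 *\<^sub>v W j) $ l" using Wc[OF j] by simp
      also have "\<dots> = (\<Sum>q<n. UR l0 $$ (l,q) * W j $ q)" using mv_index[OF URc _ l] Wc[OF j] by simp
      finally show "(\<Sum>q<n. c j * (UR l0 $$ (l,q) * W j $ q)) = c j * Y l0 $$ (l,j)"
        by (simp add: sum_distrib_left)
    qed
    finally show "u l0 $ l = (\<Sum>j<s p. c j * Y l0 $$ (l,j))" .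
  qed
qed

definition vv :: "nat \<times> nat \<Rightarrow> complex \<Rightarrow> complex vec" where
  "vv = (\<lambda>(i, j) z. Y z *\<^sub>v (mat_diag r (\<lambda>l. inverse ((z - l0) ^ m l))
                        *\<^sub>v ((z - l0) ^ (j - 1) \<cdot>\<^sub>v unit_vec r i)))"

lemma vv_c: "vv k z \<in> carrier_vec n"
  using Yc[of z] by (cases k) (simp add: vv_def carrier_dim_vec)

lemma vv_idx:
  assumes i: "i < r" and l: "l < n"
  shows "vv (i,j) z $ l = (z - l0) ^ (j - 1) * inverse ((z - l0) ^ m i) * Y z $$ (l,i)"
proof -
  define e where "e = (z - l0) ^ (j - 1) \<cdot>\<^sub>v unit_vec r i"
  define dv where "dv = mat_diag r (\<lambda>l. inverse ((z - l0) ^ m l)) *\<^sub>v e"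
  have ec: "e \<in> carrier_vec r" by (simp add: e_def)
  have dvc: "dv \<in> carrier_vec r" unfolding dv_def by (rule mult_mat_vec_carrier[OF mat_diag_dim ec])
  have dvi: "dv $ t = (if t = i then inverse ((z - l0) ^ m i) * (z - l0) ^ (j - 1) else 0)" if t: "t < r" for t
    unfolding dv_def using diag_mv[OF ec t] t i by (simp add: e_def)
  have "vv (i,j) z $ l = (Y z *\<^sub>v dv) $ l" by (simp add: vv_def dv_def e_def)
  also have "\<dots> = (\<Sum>t<r. Y z $$ (l,t) * dv $ t)" by (rule mv_index[OF Yc dvc l])
  also have "\<dots> = (\<Sum>t<r. if t = i then Y z $$ (l,t) * (inverse ((z - l0) ^ m i) * (z - l0) ^ (j - 1)) else 0)"
    by (intro sum.cong) (auto simp: dvi)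
  also have "\<dots> = (z - l0) ^ (j - 1) * inverse ((z - l0) ^ m i) * Y z $$ (l,i)" using i by simp
  finally show ?thesis .
qed

lemma vv_fun:
  assumes i: "i < r" and l: "l < n"
  shows "(\<lambda>z. vv (i,j) z $ l) = (\<lambda>z. (z - l0) ^ (j - 1) * inverse ((z - l0) ^ m i) * Y z $$ (l,i))"
  using vv_idx[OF i l] by auto

lemma vv_mero: assumes i: "i < r" shows "mero_vec n \<Omega> (vv (i,j))"
  unfolding mero_vec_def
proof (intro conjI allI impI)
  show "vv (i,j) z \<in> carrier_vec n" for z by (rule vv_c)
  fix l assume l: "l < n"
  have "(\<lambda>z. Y z $$ (l,i)) holomorphic_on \<Omega>" using Yhol l i unfolding hol_mat_def by blast
  then have "(\<lambda>z. Y z $$ (l,i)) analytic_on \<Omega>" using opn by (simp add: analytic_on_open)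
  then have "(\<lambda>z. Y z $$ (l,i)) meromorphic_on \<Omega>" by (rule analytic_on_imp_meromorphic_on)
  then show "(\<lambda>z. vv (i,j) z $ l) meromorphic_on \<Omega>"
    unfolding vv_fun[OF i l] by (intro meromorphic_intros)
qed

lemma vv_Tcol: assumes i: "i < r"
  shows "vv (i,j) z = ((z - l0) ^ (j - 1) * inverse ((z - l0) ^ m i)) \<cdot>\<^sub>v col (Y z) i"
  by (rule eq_vecI) (use vv_idx[OF i] colY_index[OF _ i] vv_c[of "(i,j)" z] Yc[of z] in auto)

lemma vv_T: assumes i: "i < r" and j: "1 \<le> j" and l: "l < n"
  shows "h0 l0 (\<lambda>z. (T z *\<^sub>v vv (i,j) z) $ l)"
proof -
  obtain g where gc: "\<And>z. g z \<in> carrier_vec n" and gan: "\<And>l. l<n \<Longrightarrow> (\<lambda>z. g z $ l) analytic_on {l0}"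
    and ge: "\<forall>\<^sub>F z in at l0. T z *\<^sub>v col (Y z) i = (z - l0) ^ m i \<cdot>\<^sub>v g z"
    using ordge_m[OF i] ordge_def by auto
  have nz: "\<forall>\<^sub>F z in at l0. z \<noteq> l0" by (simp add: eventually_at_filter)
  have "\<forall>\<^sub>F z in at l0. (T z *\<^sub>v vv (i,j) z) $ l = (z - l0) ^ (j - 1) * g z $ l"
    using ge nz
  proof eventually_elim
    case (elim z)
    have "(T z *\<^sub>v vv (i,j) z) $ l = ((z - l0) ^ (j - 1) * inverse ((z - l0) ^ m i)) * (T z *\<^sub>v col (Y z) i) $ l"
      unfolding vv_Tcol[OF i] using mult_mat_vec[OF Tc colY_c] l Tc[of z] by simp
    also have "\<dots> = ((z - l0) ^ (j - 1) * inverse ((z - l0) ^ m i)) * ((z - l0) ^ m i * g z $ l)"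
      unfolding elim(1) using l gc[of z] by simp
    also have "\<dots> = (z - l0) ^ (j - 1) * g z $ l" using elim(2) by (simp add: field_simps)
    finally show ?case .
  qed
  then show ?thesis by (rule h0_cong) (intro h0_an analytic_intros gan l)
qed

abbreviation "KK \<equiv> {(i, j). i < r \<and> 1 \<le> j \<and> j \<le> m i}"

lemma KK_Sigma: "KK = Sigma {..<r} (\<lambda>i. {1..m i})" by auto

lemma KK_fin: "finite KK" unfolding KK_Sigma by auto

lemma sum_KK: "(\<Sum>k\<in>KK. f k) = (\<Sum>i<r. \<Sum>j\<in>{1..m i}. f (i,j))"
  unfolding KK_Sigma by (subst sum.Sigma) auto

lemma lc_idx: "l < n \<Longrightarrow> lin_comb n KK c vv z $ l = (\<Sum>k\<in>KK. c k * vv k z $ l)"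
  by (simp add: lin_comb_def)

lemma indep:
  assumes h: "\<forall>l<n. h0 l0 (\<lambda>z. lin_comb n KK c vv z $ l)"
  shows "\<forall>k\<in>KK. c k = 0"
proof (rule ccontr)
  assume "\<not> (\<forall>k\<in>KK. c k = 0)"
  then have ne: "{k\<in>KK. c k \<noteq> 0} \<noteq> {}" by auto
  define F where "F = (\<lambda>(i::nat, j::nat). m i - (j - 1))"
  define P where "P = Max (F ` {k\<in>KK. c k \<noteq> 0})"
  have fin: "finite {k\<in>KK. c k \<noteq> 0}" using KK_fin by simp
  have "P \<in> F ` {k\<in>KK. c k \<noteq> 0}" unfolding P_def using fin ne by (intro Max_in) auto
  then obtain i0 j0 where k0: "(i0,j0) \<in> KK" "c (i0,j0) \<noteq> 0" "F (i0,j0) = P" by auto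
  have Pge: "F (i,j) \<le> P" if "(i,j) \<in> KK" "c (i,j) \<noteq> 0" for i j
    unfolding P_def using fin that by (intro Max_ge) auto
  have P1: "1 \<le> P" using k0 unfolding F_def by auto
  define a where "a i = (\<Sum>j\<in>{1..m i}. c (i,j) * 0 ^ (P + (j - 1) - m i))" for i
  define E where "E l z = (\<Sum>i<r. \<Sum>j\<in>{1..m i}. c (i,j) * (z - l0) ^ (P + (j - 1) - m i) * Y z $$ (l,i))" for l z
  have E0: "E l l0 = 0" if l: "l < n" for l
  proof -
    have nz: "\<forall>\<^sub>F z in at l0. z \<noteq> l0" by (simp add: eventually_at_filter)
    have eq: "\<forall>\<^sub>F z in at l0. (z - l0) ^ P * lin_comb n KK c vv z $ l = E l z"
      using nz
    proof eventually_elim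
      case (elim z)
      have "(z - l0) ^ P * lin_comb n KK c vv z $ l = (\<Sum>i<r. \<Sum>j\<in>{1..m i}. (z - l0) ^ P * (c (i,j) * vv (i,j) z $ l))"
        unfolding lc_idx[OF l] sum_KK by (simp add: sum_distrib_left)
      also have "\<dots> = E l z" unfolding E_def
      proof (intro sum.cong refl)
        fix i j assume i: "i \<in> {..<r}" and j: "j \<in> {1..m i}"
        show "(z - l0) ^ P * (c (i,j) * vv (i,j) z $ l) = c (i,j) * (z - l0) ^ (P + (j - 1) - m i) * Y z $$ (l,i)"
        proof (cases "c (i,j) = 0")
          case True then show ?thesis by simp
        next
          case False
          have "F (i,j) \<le> P" using Pge[of i j] i j False by auto
          then have le: "m i \<le> P + (j - 1)" unfolding F_def by auto
          have "(z - l0) ^ P * ((z - l0) ^ (j - 1) * inverse ((z - l0) ^ m i)) = (z - l0) ^ (P + (j - 1) - m i)"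
            by (rule pow_coef) (use elim le in auto)
          then show ?thesis using vv_idx[of i l j z] i l by (simp add: mult_ac)
        qed
      qed
      finally show ?case .
    qed
    have lim1: "((\<lambda>z. (z - l0) ^ P * lin_comb n KK c vv z $ l) \<longlongrightarrow> 0) (at l0)"
      using h l P1 by (intro h0_lim) auto
    have lim2: "(E l \<longlongrightarrow> 0) (at l0)" by (rule tendsto_cong[THEN iffD1, OF eq lim1])
    have "isCont (E l) l0"
      unfolding E_def[abs_def] using l
      by (intro continuous_intros analytic_at_imp_isCont Yan) auto
    then have "(E l \<longlongrightarrow> E l l0) (at l0)" by (simp add: isCont_def)
    then show ?thesis using lim2 by (rule tendsto_unique[OF at_neq_bot])
  qed
  have Ea: "E l l0 = (\<Sum>i<r. Y l0 $$ (l,i) * a i)" for l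
    unfolding E_def a_def by (simp add: sum_distrib_left sum_distrib_right mult_ac)
  define av where "av = vec r a"
  have avc: "av \<in> carrier_vec r" by (simp add: av_def)
  have "Y l0 *\<^sub>v av = 0\<^sub>v n"
  proof (rule eq_vecI)
    fix l assume "l < dim_vec (0\<^sub>v n :: complex vec)"
    then have l: "l < n" by simp
    have "(Y l0 *\<^sub>v av) $ l = (\<Sum>i<r. Y l0 $$ (l,i) * av $ i)" by (rule mv_index[OF Yc avc l])
    also have "\<dots> = E l l0" unfolding Ea av_def by (intro sum.cong) auto
    finally show "(Y l0 *\<^sub>v av) $ l = 0\<^sub>v n $ l" using E0[OF l] l by simp
  qed (use Yc[of l0] in simp)
  then have "av = 0\<^sub>v r" by (rule Yindep[OF avc])
  then have "a i0 = 0" using k0(1) by (auto simp: av_def dest: arg_cong[of _ _ "\<lambda>v. v $ i0"])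
  moreover have "a i0 = c (i0,j0)"
  proof -
    have j0: "j0 \<in> {1..m i0}" "j0 - 1 \<le> m i0" using k0(1) by auto
    have "a i0 = c (i0,j0) * 0 ^ (P + (j0 - 1) - m i0) + (\<Sum>j\<in>{1..m i0} - {j0}. c (i0,j) * 0 ^ (P + (j - 1) - m i0))"
      unfolding a_def by (rule sum.remove) (use j0 in auto)
    also have "(\<Sum>j\<in>{1..m i0} - {j0}. c (i0,j) * 0 ^ (P + (j - 1) - m i0)) = 0"
    proof (rule sum.neutral, rule ballI)
      fix j assume j: "j \<in> {1..m i0} - {j0}"
      show "c (i0,j) * 0 ^ (P + (j - 1) - m i0) = 0"
      proof (cases "c (i0,j) = 0")
        case False
        have "F (i0,j) \<le> P" using Pge[of i0 j] j k0(1) False by auto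
        moreover have "F (i0,j) \<noteq> P" using k0(3) j j0 unfolding F_def by auto
        ultimately have "0 < P + (j - 1) - m i0" using j unfolding F_def by auto
        then show ?thesis by simp
      qed simp
    qed
    also have "P + (j0 - 1) - m i0 = 0" using k0(3) j0 unfolding F_def by auto
    finally show ?thesis by simp
  qed
  ultimately show False using k0(2) by simp
qed

lemma lc_add: "l < n \<Longrightarrow> lin_comb n KK (\<lambda>k. c1 k + c2 k) vv z $ l = lin_comb n KK c1 vv z $ l + lin_comb n KK c2 vv z $ l"
  unfolding lin_comb_def by (simp add: distrib_right sum.distrib)

lemma lc_c: "lin_comb n KK c vv z \<in> carrier_vec n" by (simp add: lin_comb_def)

lemma T_lc: assumes l: "l < n"
  shows "(T z *\<^sub>v lin_comb n KK c vv z) $ l = (\<Sum>k\<in>KK. c k * (T z *\<^sub>v vv k z) $ l)"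
proof -
  have "(T z *\<^sub>v lin_comb n KK c vv z) $ l = (\<Sum>q<n. T z $$ (l,q) * (\<Sum>k\<in>KK. c k * vv k z $ q))"
    using mv_index[OF Tc lc_c l] lc_idx by simp
  also have "\<dots> = (\<Sum>q<n. \<Sum>k\<in>KK. c k * (T z $$ (l,q) * vv k z $ q))"
    by (simp add: sum_distrib_left mult_ac)
  also have "\<dots> = (\<Sum>k\<in>KK. \<Sum>q<n. c k * (T z $$ (l,q) * vv k z $ q))" by (rule sum.swap)
  also have "\<dots> = (\<Sum>k\<in>KK. c k * (T z *\<^sub>v vv k z) $ l)"
    using mv_index[OF Tc vv_c l] by (simp add: sum_distrib_left)
  finally show ?thesis .
qed

lemma T_lc_h0: assumes l: "l < n" shows "h0 l0 (\<lambda>z. (T z *\<^sub>v lin_comb n KK c vv z) $ l)"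
proof -
  have "h0 l0 (\<lambda>z. \<Sum>k\<in>KK. c k * (T z *\<^sub>v vv k z) $ l)"
  proof (rule h0_sum[OF KK_fin])
    fix k assume k: "k \<in> KK"
    then obtain i j where ij: "k = (i,j)" "i < r" "1 \<le> j" by auto
    show "h0 l0 (\<lambda>z. c k * (T z *\<^sub>v vv k z) $ l)"
      unfolding ij(1) by (rule h0_mult[OF h0_const vv_T[OF ij(2,3) l]])
  qed
  then show ?thesis using T_lc[OF l] by simp
qed

lemma span_ind:
  "\<forall>y. (\<forall>z. y z \<in> carrier_vec n) \<and> (\<forall>l<n. h0 l0 (\<lambda>z. (z - l0) ^ p * y z $ l)) \<and>
     (\<forall>l<n. h0 l0 (\<lambda>z. (T z *\<^sub>v y z) $ l))
     \<longrightarrow> (\<exists>c. \<forall>l<n. h0 l0 (\<lambda>z. y z $ l - lin_comb n KK c vv z $ l))"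
proof (induction p)
  case 0
  show ?case
  proof (intro allI impI)
    fix y :: "complex \<Rightarrow> complex vec"
    assume "(\<forall>z. y z \<in> carrier_vec n) \<and> (\<forall>l<n. h0 l0 (\<lambda>z. (z - l0) ^ 0 * y z $ l)) \<and>
     (\<forall>l<n. h0 l0 (\<lambda>z. (T z *\<^sub>v y z) $ l))"
    then show "\<exists>c. \<forall>l<n. h0 l0 (\<lambda>z. y z $ l - lin_comb n KK c vv z $ l)"
      by (intro exI[of _ "\<lambda>_. 0"]) (simp add: lin_comb_def)
  qed
next
  case (Suc p)
  show ?case
  proof (intro allI impI)
    fix y :: "complex \<Rightarrow> complex vec"
    assume asm: "(\<forall>z. y z \<in> carrier_vec n) \<and> (\<forall>l<n. h0 l0 (\<lambda>z. (z - l0) ^ Suc p * y z $ l)) \<and>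
     (\<forall>l<n. h0 l0 (\<lambda>z. (T z *\<^sub>v y z) $ l))"
    then have yc: "\<And>z. y z \<in> carrier_vec n" and hy: "\<And>l. l < n \<Longrightarrow> h0 l0 (\<lambda>z. (z - l0) ^ Suc p * y z $ l)"
      and hT: "\<And>l. l < n \<Longrightarrow> h0 l0 (\<lambda>z. (T z *\<^sub>v y z) $ l)" by auto
    have "\<forall>l\<in>{..<n}. \<exists>U. U analytic_on {l0} \<and> (\<forall>\<^sub>F z in at l0. (z - l0) ^ Suc p * y z $ l = U z)"
      using hy unfolding h0_def by blast
    from bchoice[OF this] obtain U where U: "\<forall>l\<in>{..<n}. U l analytic_on {l0} \<and> (\<forall>\<^sub>F z in at l0. (z - l0) ^ Suc p * y z $ l = U l z)"
      by blast
    have "\<forall>l\<in>{..<n}. \<exists>H. H analytic_on {l0} \<and> (\<forall>\<^sub>F z in at l0. (T z *\<^sub>v y z) $ l = H z)"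
      using hT unfolding h0_def by blast
    from bchoice[OF this] obtain H where H: "\<forall>l\<in>{..<n}. H l analytic_on {l0} \<and> (\<forall>\<^sub>F z in at l0. (T z *\<^sub>v y z) $ l = H l z)"
      by blast
    define u where "u z = vec n (\<lambda>l. U l z)" for z
    define g where "g z = vec n (\<lambda>l. H l z)" for z
    have uc: "u z \<in> carrier_vec n" for z by (simp add: u_def)
    have uan: "(\<lambda>z. u z $ l) analytic_on {l0}" if "l < n" for l
      using U that by (simp add: u_def)
    have gc: "g z \<in> carrier_vec n" for z by (simp add: g_def)
    have gan: "(\<lambda>z. g z $ l) analytic_on {l0}" if "l < n" for l
      using H that by (simp add: g_def)
    have evU: "\<forall>\<^sub>F z in at l0. \<forall>l\<in>{..<n}. (z - l0) ^ Suc p * y z $ l = U l z"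
      by (rule eventually_ball_finite) (use U in auto)
    have evH: "\<forall>\<^sub>F z in at l0. \<forall>l\<in>{..<n}. (T z *\<^sub>v y z) $ l = H l z"
      by (rule eventually_ball_finite) (use H in auto)
    have "\<forall>\<^sub>F z in at l0. T z *\<^sub>v u z = (z - l0) ^ Suc p \<cdot>\<^sub>v g z"
      using evU evH
    proof eventually_elim
      case (elim z)
      have "u z = (z - l0) ^ Suc p \<cdot>\<^sub>v y z"
        by (rule eq_vecI) (use elim(1) yc[of z] in \<open>auto simp: u_def\<close>)
      then have "T z *\<^sub>v u z = (z - l0) ^ Suc p \<cdot>\<^sub>v (T z *\<^sub>v y z)"
        using mult_mat_vec[OF Tc yc] by simp
      also have "T z *\<^sub>v y z = g z"
        by (rule eq_vecI) (use elim(2) Tc[of z] in \<open>auto simp: g_def\<close>)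
      finally show ?case .
    qed
    then have ord: "ordge (\<lambda>z. T z *\<^sub>v u z) (Suc p)"
      unfolding ordge_def using gc gan by blast
    obtain a where a: "\<And>l. l < n \<Longrightarrow> u l0 $ l = (\<Sum>i<s (Suc p). a i * Y l0 $$ (l,i))"
      using span_pt[OF uc uan ord] by auto
    define s' where "s' = s (Suc p)"
    have s'r: "s' \<le> r" unfolding s'_def by (rule sp_le_r) simp
    have ms': "Suc p \<le> m i" if "i < s'" for i
    proof -
      have "i < n" using that s_le[of "Suc p"] unfolding s'_def by simp
      then show ?thesis using s_char[of i "Suc p"] that unfolding s'_def by simp
    qed
    define c' where "c' = (\<lambda>(i::nat, j::nat). if i < s' \<and> j = m i - p then a i else 0)"
    have lc': "lin_comb n KK c' vv z $ l = (\<Sum>i<s'. a i * vv (i, m i - p) z $ l)" if l: "l < n" for z l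
    proof -
      have "lin_comb n KK c' vv z $ l = (\<Sum>i<r. \<Sum>j\<in>{1..m i}. c' (i,j) * vv (i,j) z $ l)"
        unfolding lc_idx[OF l] sum_KK ..
      also have "\<dots> = (\<Sum>i<r. if i < s' then a i * vv (i, m i - p) z $ l else 0)"
      proof (intro sum.cong refl)
        fix i assume i: "i \<in> {..<r}"
        show "(\<Sum>j\<in>{1..m i}. c' (i,j) * vv (i,j) z $ l) = (if i < s' then a i * vv (i, m i - p) z $ l else 0)"
        proof (cases "i < s'")
          case True
          have mem: "m i - p \<in> {1..m i}" using ms'[OF True] by auto
          have "(\<Sum>j\<in>{1..m i}. c' (i,j) * vv (i,j) z $ l) = (\<Sum>j\<in>{1..m i}. if j = m i - p then a i * vv (i,j) z $ l else 0)"
            using True by (intro sum.cong) (auto simp: c'_def)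
          also have "\<dots> = a i * vv (i, m i - p) z $ l" using mem by (simp add: sum.delta')
          finally show ?thesis using True by simp
        next
          case False then show ?thesis by (simp add: c'_def)
        qed
      qed
      also have "\<dots> = (\<Sum>i<s'. a i * vv (i, m i - p) z $ l)"
        using s'r by (subst sum.mono_neutral_right[of "{..<r}" "{..<s'}"]) auto
      finally show ?thesis .
    qed
    define y' where "y' z = y z - lin_comb n KK c' vv z" for z
    have y'c: "y' z \<in> carrier_vec n" for z using yc[of z] lc_c[of c' z] unfolding y'_def by (rule minus_carrier_vec)
    have y'idx: "y' z $ l = y z $ l - lin_comb n KK c' vv z $ l" if "l < n" for z l
      using that yc[of z] by (simp add: y'_def lin_comb_def)
    have hy': "h0 l0 (\<lambda>z. (z - l0) ^ p * y' z $ l)" if l: "l < n" for l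
    proof -
      define G where "G z = U l z - (\<Sum>i<s'. a i * Y z $$ (l,i))" for z
      have Gan: "G analytic_on {l0}" unfolding G_def using U l s'r
        by (intro analytic_intros Yan) auto
      have G0: "G l0 = 0"
      proof -
        have "U l l0 = u l0 $ l" using l by (simp add: u_def)
        then show ?thesis using a[OF l] unfolding G_def s'_def by simp
      qed
      have nz: "\<forall>\<^sub>F z in at l0. z \<noteq> l0" by (simp add: eventually_at_filter)
      have "\<forall>\<^sub>F z in at l0. (z - l0) ^ p * y' z $ l = G z / (z - l0)"
        using evU nz
      proof eventually_elim
        case (elim z)
        define w where "w = z - l0"
        have zz: "w \<noteq> 0" using elim(2) by (simp add: w_def)
        have Ul: "U l z = w ^ Suc p * y z $ l" using elim(1) l by (simp add: w_def)
        have coef: "w ^ p * (w ^ (m i - p - 1) * inverse (w ^ m i)) = inverse w"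
          if i: "i < s'" for i
        proof -
          define M where "M = m i"
          have MM: "M = Suc (p + (M - p - 1))" using ms'[OF i] by (simp add: M_def)
          have e: "w ^ M = w ^ p * w ^ (M - p - 1) * w"
          proof -
            have "w ^ M = w ^ Suc (p + (M - p - 1))" using MM by (rule arg_cong)
            also have "\<dots> = w ^ p * w ^ (M - p - 1) * w" by (simp only: power_Suc2 power_add)
            finally show ?thesis .
          qed
          have A0: "w ^ p * w ^ (M - p - 1) \<noteq> 0" using zz by simp
          have "w ^ p * (w ^ (M - p - 1) * inverse (w ^ M)) = (w ^ p * w ^ (M - p - 1)) * inverse ((w ^ p * w ^ (M - p - 1)) * w)"
            unfolding e by (simp only: mult.assoc)
          also have "\<dots> = inverse w" by (rule inv_cancel[OF A0])
          finally show ?thesis unfolding M_def .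
        qed
        have t1: "w ^ p * y' z $ l = w ^ p * y z $ l - (\<Sum>i<s'. a i * (w ^ p * vv (i, m i - p) z $ l))"
          unfolding y'idx[OF l] lc'[OF l] by (simp add: right_diff_distrib sum_distrib_left mult_ac)
        have t2: "(\<Sum>i<s'. a i * (w ^ p * vv (i, m i - p) z $ l)) = (\<Sum>i<s'. a i * Y z $$ (l,i)) / w"
        proof -
          have "(\<Sum>i<s'. a i * (w ^ p * vv (i, m i - p) z $ l)) = (\<Sum>i<s'. a i * Y z $$ (l,i) * inverse w)"
          proof (intro sum.cong refl)
            fix i assume "i \<in> {..<s'}"
            then have i: "i < s'" by simp
            have vi: "vv (i, m i - p) z $ l = w ^ (m i - p - 1) * inverse (w ^ m i) * Y z $$ (l,i)"
              using vv_idx[of i l "m i - p" z] i s'r l unfolding w_def by simp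
            have "w ^ p * vv (i, m i - p) z $ l = (w ^ p * (w ^ (m i - p - 1) * inverse (w ^ m i))) * Y z $$ (l,i)"
              unfolding vi by (simp only: mult.assoc)
            also have "\<dots> = inverse w * Y z $$ (l,i)" unfolding coef[OF i] ..
            finally show "a i * (w ^ p * vv (i, m i - p) z $ l) = a i * Y z $$ (l,i) * inverse w"
              by simp
          qed
          then show ?thesis by (simp add: sum_distrib_right divide_inverse)
        qed
        have t3: "w ^ p * y z $ l = U l z / w" unfolding Ul using zz by (simp add: field_simps)
        have "w ^ p * y' z $ l = U l z / w - (\<Sum>i<s'. a i * Y z $$ (l,i)) / w"
          using t1 unfolding t2 t3 .
        also have "\<dots> = G z / w" unfolding G_def by (simp add: diff_divide_distrib)
        finally show ?case unfolding w_def .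
      qed
      then show ?thesis by (rule h0_cong) (rule h0_div[OF Gan G0])
    qed
    have hTy': "h0 l0 (\<lambda>z. (T z *\<^sub>v y' z) $ l)" if l: "l < n" for l
    proof -
      have "(T z *\<^sub>v y' z) $ l = (T z *\<^sub>v y z) $ l - (T z *\<^sub>v lin_comb n KK c' vv z) $ l" for z
        unfolding y'_def using mult_minus_distrib_mat_vec[OF Tc yc lc_c] l Tc[of z] by simp
      then show ?thesis using h0_diff[OF hT[OF l] T_lc_h0[OF l]] by simp
    qed
    obtain c'' where c'': "\<forall>l<n. h0 l0 (\<lambda>z. y' z $ l - lin_comb n KK c'' vv z $ l)"
      using Suc.IH[rule_format, of y'] y'c hy' hTy' by blast
    show "\<exists>c. \<forall>l<n. h0 l0 (\<lambda>z. y z $ l - lin_comb n KK c vv z $ l)"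
    proof (intro exI[of _ "\<lambda>k. c' k + c'' k"] allI impI)
      fix l assume l: "l < n"
      have "(\<lambda>z. y z $ l - lin_comb n KK (\<lambda>k. c' k + c'' k) vv z $ l) = (\<lambda>z. y' z $ l - lin_comb n KK c'' vv z $ l)"
        using y'idx[OF l] lc_add[OF l] by (auto simp: algebra_simps)
      then show "h0 l0 (\<lambda>z. y z $ l - lin_comb n KK (\<lambda>k. c' k + c'' k) vv z $ l)" using c'' l by simp
    qed
  qed
qed

lemma spanning:
  assumes y: "mero_vec n \<Omega> y" and Ty: "hol0_vec n l0 (\<lambda>z. T z *\<^sub>v y z)"
  shows "\<exists>c. hol0_vec n l0 (\<lambda>z. y z - lin_comb n KK c vv z)"
proof -
  have yc: "\<And>z. y z \<in> carrier_vec n" and ym: "\<And>l. l < n \<Longrightarrow> (\<lambda>z. y z $ l) meromorphic_on \<Omega>"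
    using y unfolding mero_vec_def by auto
  have "\<forall>l\<in>{..<n}. \<exists>p. h0 l0 (\<lambda>z. (z - l0) ^ p * y z $ l)"
    using mero_pole[OF ym l0] by auto
  from bchoice[OF this] obtain pp where pp: "\<And>l. l < n \<Longrightarrow> h0 l0 (\<lambda>z. (z - l0) ^ pp l * y z $ l)" by auto
  define p where "p = (\<Sum>l<n. pp l)"
  have hp: "h0 l0 (\<lambda>z. (z - l0) ^ p * y z $ l)" if l: "l < n" for l
  proof -
    have "pp l \<le> p" unfolding p_def using l by (intro member_le_sum) auto
    then have eq: "pp l + (p - pp l) = p" by simp
    show ?thesis using h0_shift[OF pp[OF l], of "p - pp l"] unfolding eq .
  qed
  have Ty': "\<forall>i<n. h0 l0 (\<lambda>z. (T z *\<^sub>v y z) $ i)" using Ty by (simp only: hol0_vec_h0)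
  have hT: "h0 l0 (\<lambda>z. (T z *\<^sub>v y z) $ l)" if "l < n" for l using Ty' that by blast
  obtain c where c: "\<forall>l<n. h0 l0 (\<lambda>z. y z $ l - lin_comb n KK c vv z $ l)"
    using span_ind[rule_format, of y p] yc hp hT by blast
  have "hol0_vec n l0 (\<lambda>z. y z - lin_comb n KK c vv z)"
    unfolding hol0_vec_h0
  proof (intro allI impI)
    fix l assume l: "l < n"
    have eq: "(\<lambda>z. (y z - lin_comb n KK c vv z) $ l) = (\<lambda>z. y z $ l - lin_comb n KK c vv z $ l)"
    proof
      fix z show "(y z - lin_comb n KK c vv z) $ l = y z $ l - lin_comb n KK c vv z $ l"
        using l yc[of z] lc_c[of c z] by simp
    qed
    show "h0 l0 (\<lambda>z. (y z - lin_comb n KK c vv z) $ l)" unfolding eq using c l by blast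
  qed
  then show ?thesis by blast
qed

lemma basis: "basis_of_ker_Tbar n \<Omega> T l0 KK vv"
  unfolding basis_of_ker_Tbar_def
proof (intro conjI ballI allI impI)
  show "finite KK" by (rule KK_fin)
next
  fix k assume "k \<in> KK"
  then obtain i j where ij: "k = (i,j)" "i < r" "1 \<le> j" by auto
  show "mero_vec n \<Omega> (vv k)" unfolding ij(1) by (rule vv_mero[OF ij(2)])
  show "hol0_vec n l0 (\<lambda>z. T z *\<^sub>v vv k z)" unfolding hol0_vec_h0 ij(1) using vv_T[OF ij(2,3)] by blast
next
  fix c k assume H: "hol0_vec n l0 (lin_comb n KK c vv)" and k: "k \<in> KK"
  have "\<forall>l<n. h0 l0 (\<lambda>z. lin_comb n KK c vv z $ l)" using H by (simp only: hol0_vec_h0)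
  then show "c k = 0" using indep k by blast
next
  fix y assume "mero_vec n \<Omega> y \<and> hol0_vec n l0 (\<lambda>z. T z *\<^sub>v y z)"
  then have "mero_vec n \<Omega> y" "hol0_vec n l0 (\<lambda>z. T z *\<^sub>v y z)" by auto
  then show "\<exists>c. hol0_vec n l0 (\<lambda>z. y z - lin_comb n KK c vv z)" by (rule spanning)
qed

end

theorem mainTheorem18:
  fixes \<Omega> :: "complex set" and l0 :: complex and n r :: nat
    and T Y :: "complex \<Rightarrow> complex mat" and m :: "nat \<Rightarrow> nat"
  assumes "open \<Omega>" and "connected \<Omega>" and "l0 \<in> \<Omega>"
    and "hol_mat n n \<Omega> T"
    and "\<exists>z\<in>\<Omega>. det (T z) \<noteq> 0"
    and "det (T l0) = 0"
    and "r = kernel_dim (T l0)"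
    and "partial_multiplicities n T l0 m"
    and "right_canonical_matrix n r \<Omega> T l0 m Y"
  shows "basis_of_ker_Tbar n \<Omega> T l0 {(i, j). i < r \<and> 1 \<le> j \<and> j \<le> m i}
           (\<lambda>(i, j) z. Y z *\<^sub>v (mat_diag r (\<lambda>l. inverse ((z - l0) ^ m l))
                        *\<^sub>v ((z - l0) ^ (j - 1) \<cdot>\<^sub>v unit_vec r i)))"
proof -
  obtain UL UR where UL: "hol0_mat n l0 UL" and UR: "hol0_mat n l0 UR"
    and d: "det (UL l0) \<noteq> 0" "det (UR l0) \<noteq> 0"
    and diag: "\<forall>\<^sub>F z in nhds l0. UL z * T z * UR z = mat_diag n (\<lambda>i. (z - l0) ^ m i)"
    and mono: "\<And>i j. i \<le> j \<Longrightarrow> j < n \<Longrightarrow> m j \<le> m i"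
    using assms(8) unfolding partial_multiplicities_def by blast
  interpret cm \<Omega> l0 n r T Y UL UR m
    by unfold_locales (fact assms UL UR d diag mono)+
  show ?thesis using basis unfolding vv_def .
qed

end
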